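(* Let $k,m$ be positive integers, $\phi\in J_{k,m}(\mathcal O_K)$ with power series expansion $\phi=\sum_{\alpha,\beta\ge0}\chi_{\alpha,\beta}(\tau)z_1^\alpha z_2^\beta$, and $\nu\ge0$. Then $$D_\nu\phi=\nu!\sum_{\mu=0}^{\nu}(-4)^{\nu-\mu}(8\pi i m)^{\mu}\frac{(k+2\nu-\mu-2)!}{\mu!\,(k+\nu-2)!}\,\chi^{(\mu)}_{\nu-\mu,\nu-\mu}(\tau),$$ where $g^{(\mu)}=\bigl(\frac{\partial}{\partial\tau}\bigr)^\mu g$.
   Context: Notation: $\mathcal H$ is the upper half plane, $e(x)=e^{2\pi i x}$, $K=\mathbb Q(i)$, $\mathcal O_K=\mathbb Z[i]$, $\mathcal O_K^\times=\{\pm1,\pm i\}$, $N(x)=x\bar x$, $\mathcal O_K^\sharp=\frac i2\mathcal O_K$. For integers $k,m$, $\epsilon\in\mathcal O_K^\times$, $M=\begin{pmatrix}a&b\\c&d\end{pmatrix}\in SL(2,\mathbb R)$ and $\phi$ a function on $\mathcal H\times\mathbb C^2$: $(\phi|_{k,m}\epsilon M)(\tau,z_1,z_2)=\epsilon^{-k}(c\tau+d)^{-k}e^{-2\pi i m c z_1z_2/(c\tau+d)}\phi\bigl(M\tau,\tfrac{\epsilon z_1}{c\tau+d},\tfrac{\bar\epsilon z_2}{c\tau+d}\bigr)$, $M\tau=\frac{a\tau+b}{c\tau+d}$; for $\lambda,\mu\in\mathcal O_K$, $(\phi|_m[\lambda,\mu])(\tau,z_1,z_2)=e^{2\pi i m(N(\lambda)\tau+\bar\lambda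 z_1+\lambda z_2)}\phi(\tau,z_1+\lambda\tau+\mu,z_2+\bar\lambda\tau+\bar\mu)$. For positive integers $k,m$, $J_{k,m}(\mathcal O_K)$ is the space of holomorphic $\phi:\mathcal H\times\mathbb C^2\to\mathbb C$ with $\phi|_{k,m}\epsilon M=\phi$ for all $\epsilon\in\mathcal O_K^\times$, $M\in SL(2,\mathbb Z)$, $\phi|_m[\lambda,\mu]=\phi$ for all $\lambda,\mu\in\mathcal O_K$, and with a Fourier expansion $\phi=\sum_{n\ge0}\sum_{r\in\mathcal O_K^\sharp,\ nm\ge N(r)}c_\phi(n,r)\,e(n\tau+rz_1+\bar rz_2)$. The diagonal part of $\phi$ is $\phi_0=\sum_{\nu\ge0}\chi_{\nu,\nu}(\tau)(z_1z_2)^\nu$. Let $L_{k,m}=8\pi i m\partial_\tau-\frac{2k-2}{z_1}\partial_{z_2}-\frac{2k-2}{z_2}\partial_{z_1}-4\partial_{z_1}\partial_{z_2}$, $\tilde D_\nu=L_{k+2\nu-2,m}\circ\cdots\circ L_{k+2,m}\circ L_{k,m}$ ($\tilde D_0=\mathrm{id}$), and $D_\nu\phi(\tau):=(\tilde D_\nu\phi_0)(\tau,0,0)$. *)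

theory Defs
  imports "HOL-Analysis.Analysis"
begin

definition e :: "complex \<Rightarrow> complex" where
  "e x = exp (2 * complex_of_real pi * \<i> * x)"

definition upper_half :: "complex set" where
  "upper_half = {t. Im t > 0}"

definition gauss_ints :: "complex set" where
  "gauss_ints = {Complex (of_int a) (of_int b) | a b. True}"

definition gauss_units :: "complex set" where
  "gauss_units = {1, -1, \<i>, -\<i>}"

definition gauss_dual :: "complex set" where
  "gauss_dual = {(\<i> / 2) * g | g. g \<in> gauss_ints}"

definition normK :: "complex \<Rightarrow> real" where
  "normK x = Re (x * cnj x)"

definition holo_HC2 :: "(complex \<Rightarrow> complex \<Rightarrow> complex \<Rightarrow> complex) \<Rightarrow> bool" where
  "holo_HC2 f \<longleftrightarrow> (\<forall>t z1 z2. t \<in> upper_half \<longrightarrow>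
     (\<exists>L. ((\<lambda>(a, b, c). f a b c) has_derivative L) (at (t, z1, z2)) \<and>
          (\<forall>w a b c. L (w * a, w * b, w * c) = w * L (a, b, c))))"

definition slash_km ::
  "nat \<Rightarrow> nat \<Rightarrow> complex \<Rightarrow> int \<Rightarrow> int \<Rightarrow> int \<Rightarrow> int \<Rightarrow>
   (complex \<Rightarrow> complex \<Rightarrow> complex \<Rightarrow> complex) \<Rightarrow> (complex \<Rightarrow> complex \<Rightarrow> complex \<Rightarrow> complex)" where
  "slash_km k m \<epsilon> a b c d \<phi> = (\<lambda>t z1 z2.
     inverse (\<epsilon> ^ k) * inverse ((of_int c * t + of_int d) ^ k) *
     e (- of_nat m * of_int c * z1 * z2 / (of_int c * t + of_int d)) *
     \<phi> ((of_int a * t + of_int b) / (of_int c * t + of_int d))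
       (\<epsilon> * z1 / (of_int c * t + of_int d)) (cnj \<epsilon> * z2 / (of_int c * t + of_int d)))"

definition slash_heis ::
  "nat \<Rightarrow> complex \<Rightarrow> complex \<Rightarrow>
   (complex \<Rightarrow> complex \<Rightarrow> complex \<Rightarrow> complex) \<Rightarrow> (complex \<Rightarrow> complex \<Rightarrow> complex \<Rightarrow> complex)" where
  "slash_heis m l u \<phi> = (\<lambda>t z1 z2.
     e (of_nat m * (of_real (normK l) * t + cnj l * z1 + l * z2)) *
     \<phi> t (z1 + l * t + u) (z2 + cnj l * t + cnj u))"

text \<open>Hermitian Jacobi forms J_{k,m}(O_K) (functions on H x C^2; values off H are irrelevant).\<close>
definition jacobi_forms :: "nat \<Rightarrow> nat \<Rightarrow> (complex \<Rightarrow> complex \<Rightarrow> complex \<Rightarrow> complex) set" where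
  "jacobi_forms k m = {\<phi>.
     holo_HC2 \<phi> \<and>
     (\<forall>\<epsilon> \<in> gauss_units. \<forall>a b c d. a * d - b * c = 1 \<longrightarrow>
        (\<forall>t \<in> upper_half. \<forall>z1 z2. slash_km k m \<epsilon> a b c d \<phi> t z1 z2 = \<phi> t z1 z2)) \<and>
     (\<forall>l \<in> gauss_ints. \<forall>u \<in> gauss_ints.
        (\<forall>t \<in> upper_half. \<forall>z1 z2. slash_heis m l u \<phi> t z1 z2 = \<phi> t z1 z2)) \<and>
     (\<exists>cf :: nat \<Rightarrow> complex \<Rightarrow> complex. \<forall>t \<in> upper_half. \<forall>z1 z2.
        ((\<lambda>(n, r). cf n r * e (of_nat n * t + r * z1 + cnj r * z2)) has_sum \<phi> t z1 z2)
          {(n, r). r \<in> gauss_dual \<and> normK r \<le> real (n * m)})}"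

text \<open>Diagonal part phi_0 of the Taylor expansion phi = sum chi_{a,b}(tau) z1^a z2^b.\<close>
definition diag_part :: "(nat \<Rightarrow> nat \<Rightarrow> complex \<Rightarrow> complex) \<Rightarrow> (complex \<Rightarrow> complex \<Rightarrow> complex \<Rightarrow> complex)" where
  "diag_part chi = (\<lambda>t z1 z2. suminf (\<lambda>n. chi n n t * (z1 * z2) ^ n))"

definition pd_tau :: "(complex \<Rightarrow> complex \<Rightarrow> complex \<Rightarrow> complex) \<Rightarrow> (complex \<Rightarrow> complex \<Rightarrow> complex \<Rightarrow> complex)" where
  "pd_tau F = (\<lambda>t z1 z2. deriv (\<lambda>s. F s z1 z2) t)"
definition pd_z1 :: "(complex \<Rightarrow> complex \<Rightarrow> complex \<Rightarrow> complex) \<Rightarrow> (complex \<Rightarrow> complex \<Rightarrow> complex \<Rightarrow> complex)" where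
  "pd_z1 F = (\<lambda>t z1 z2. deriv (\<lambda>s. F t s z2) z1)"
definition pd_z2 :: "(complex \<Rightarrow> complex \<Rightarrow> complex \<Rightarrow> complex) \<Rightarrow> (complex \<Rightarrow> complex \<Rightarrow> complex \<Rightarrow> complex)" where
  "pd_z2 F = (\<lambda>t z1 z2. deriv (\<lambda>s. F t z1 s) z2)"

definition L_op :: "int \<Rightarrow> nat \<Rightarrow> (complex \<Rightarrow> complex \<Rightarrow> complex \<Rightarrow> complex) \<Rightarrow> (complex \<Rightarrow> complex \<Rightarrow> complex \<Rightarrow> complex)" where
  "L_op k m F = (\<lambda>t z1 z2.
     8 * complex_of_real pi * \<i> * of_nat m * pd_tau F t z1 z2
     - (2 * of_int k - 2) / z1 * pd_z2 F t z1 z2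
     - (2 * of_int k - 2) / z2 * pd_z1 F t z1 z2
     - 4 * pd_z1 (pd_z2 F) t z1 z2)"

fun Dtilde :: "nat \<Rightarrow> nat \<Rightarrow> nat \<Rightarrow> (complex \<Rightarrow> complex \<Rightarrow> complex \<Rightarrow> complex) \<Rightarrow> (complex \<Rightarrow> complex \<Rightarrow> complex \<Rightarrow> complex)" where
  "Dtilde k m 0 F = F"
| "Dtilde k m (Suc n) F = L_op (int k + 2 * int n) m (Dtilde k m n F)"

text \<open>D_nu phi(tau) = (tilde D_nu phi_0)(tau,0,0), the value at z1 = z2 = 0 being understood as the
  limit from the region z1 z2 /= 0 where the operator (with its 1/z1, 1/z2 terms) is literally defined.\<close>
definition D_op :: "nat \<Rightarrow> nat \<Rightarrow> nat \<Rightarrow> (nat \<Rightarrow> nat \<Rightarrow> complex \<Rightarrow> complex) \<Rightarrow> complex \<Rightarrow> complex" where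
  "D_op k m \<nu> chi t = Lim (at (0, 0) within {p :: complex \<times> complex. fst p \<noteq> 0 \<and> snd p \<noteq> 0})
      (\<lambda>p. Dtilde k m \<nu> (diag_part chi) t (fst p) (snd p))"

end

theory Submission
  imports Defs
begin

definition gq :: "(nat \<Rightarrow> nat \<Rightarrow> complex) \<Rightarrow> nat \<Rightarrow> complex \<Rightarrow> complex" where
  "gq \<beta> a q = (\<Sum>n. \<beta> n a * q ^ n)"

definition Fw :: "(nat \<Rightarrow> nat \<Rightarrow> complex) \<Rightarrow> complex \<Rightarrow> complex \<Rightarrow> complex" where
  "Fw \<beta> q w = (\<Sum>a. gq \<beta> a q * w ^ a)"

definition good :: "real \<Rightarrow> real \<Rightarrow> (nat \<Rightarrow> nat \<Rightarrow> complex) \<Rightarrow> bool" where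
  "good \<rho>0 R0 \<beta> \<longleftrightarrow> (\<forall>\<rho> R. 0 \<le> \<rho> \<longrightarrow> \<rho> < \<rho>0 \<longrightarrow> 0 \<le> R \<longrightarrow> R < R0 \<longrightarrow>
      (\<lambda>(n, a). norm (\<beta> n a) * \<rho> ^ n * R ^ a) summable_on UNIV)"

lemma poly_geom:
  fixes x y :: real
  assumes "0 \<le> x" "x < y"
  shows "\<exists>C\<ge>0. \<forall>n. real n * x ^ n \<le> C * y ^ n"
proof -
  have y: "y > 0" using assms by simp
  have "norm (x / y) < 1" using assms by simp
  from powser_times_n_limit_0[OF this] have "(\<lambda>n. real n * (x/y) ^ n) \<longlonglongrightarrow> 0" .
  then have "Bseq (\<lambda>n. real n * (x/y) ^ n)" by (intro convergent_imp_Bseq convergentI)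
  then obtain C where C: "C > 0" "\<And>n. norm (real n * (x/y) ^ n) \<le> C" by (auto simp: Bseq_def)
  have "real n * x ^ n \<le> C * y ^ n" for n
  proof -
    have "real n * (x/y) ^ n \<le> C" using C(2)[of n] by simp
    then have "real n * (x/y) ^ n * y ^ n \<le> C * y ^ n" using y by (intro mult_right_mono) auto
    moreover have "real n * (x/y) ^ n * y ^ n = real n * x ^ n" using y by (simp add: power_divide)
    ultimately show ?thesis by simp
  qed
  then show ?thesis using C(1) by (intro exI[of _ C]) auto
qed

lemma goodD:
  "good \<rho>0 R0 \<beta> \<Longrightarrow> 0 \<le> \<rho> \<Longrightarrow> \<rho> < \<rho>0 \<Longrightarrow> 0 \<le> R \<Longrightarrow> R < R0 \<Longrightarrow>
   (\<lambda>(n, a). norm (\<beta> n a) * \<rho> ^ n * R ^ a) summable_on UNIV"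
  unfolding good_def by blast

lemma good_bound:
  assumes "good \<rho>0 R0 \<beta>" "C \<ge> 0" "\<And>n a. norm (\<gamma> n a) \<le> C * norm (\<beta> n a)"
  shows "good \<rho>0 R0 \<gamma>"
  unfolding good_def
proof (intro allI impI)
  fix \<rho> R :: real assume h: "0 \<le> \<rho>" "\<rho> < \<rho>0" "0 \<le> R" "R < R0"
  have s: "(\<lambda>x. C * (case x of (n, a) \<Rightarrow> norm (\<beta> n a) * \<rho> ^ n * R ^ a)) summable_on UNIV"
    by (intro summable_on_cmult_right goodD[OF assms(1) h])
  show "(\<lambda>(n, a). norm (\<gamma> n a) * \<rho> ^ n * R ^ a) summable_on UNIV"
  proof (rule summable_on_comparison_test[OF s])
    fix x :: "nat \<times> nat" obtain n a where x: "x = (n, a)" by fastforce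
    have "norm (\<gamma> n a) * \<rho> ^ n * R ^ a \<le> C * norm (\<beta> n a) * \<rho> ^ n * R ^ a"
      using assms(3)[of n a] h by (intro mult_right_mono) auto
    then show "(case x of (n, a) \<Rightarrow> norm (\<gamma> n a) * \<rho> ^ n * R ^ a)
          \<le> C * (case x of (n, a) \<Rightarrow> norm (\<beta> n a) * \<rho> ^ n * R ^ a)" using x by (simp add: mult.assoc)
    show "0 \<le> (case x of (n, a) \<Rightarrow> norm (\<gamma> n a) * \<rho> ^ n * R ^ a)" using x h by simp
  qed
qed

lemma good_add:
  assumes "good \<rho>0 R0 \<beta>" "good \<rho>0 R0 \<gamma>"
  shows "good \<rho>0 R0 (\<lambda>n a. \<beta> n a + \<gamma> n a)"
  unfolding good_def
proof (intro allI impI)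
  fix \<rho> R :: real assume h: "0 \<le> \<rho>" "\<rho> < \<rho>0" "0 \<le> R" "R < R0"
  have s: "(\<lambda>x. (case x of (n, a) \<Rightarrow> norm (\<beta> n a) * \<rho> ^ n * R ^ a) + (case x of (n, a) \<Rightarrow> norm (\<gamma> n a) * \<rho> ^ n * R ^ a)) summable_on UNIV"
    by (intro summable_on_add goodD[OF assms(1) h] goodD[OF assms(2) h])
  show "(\<lambda>(n, a). norm (\<beta> n a + \<gamma> n a) * \<rho> ^ n * R ^ a) summable_on UNIV"
  proof (rule summable_on_comparison_test[OF s])
    fix x :: "nat \<times> nat" obtain n a where x: "x = (n, a)" by fastforce
    have "norm (\<beta> n a + \<gamma> n a) * \<rho> ^ n * R ^ a \<le> (norm (\<beta> n a) + norm (\<gamma> n a)) * \<rho> ^ n * R ^ a"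
      using h by (intro mult_right_mono norm_triangle_ineq) auto
    then show "(case x of (n, a) \<Rightarrow> norm (\<beta> n a + \<gamma> n a) * \<rho> ^ n * R ^ a)
          \<le> (case x of (n, a) \<Rightarrow> norm (\<beta> n a) * \<rho> ^ n * R ^ a) + (case x of (n, a) \<Rightarrow> norm (\<gamma> n a) * \<rho> ^ n * R ^ a)"
      using x by (simp add: algebra_simps)
    show "0 \<le> (case x of (n, a) \<Rightarrow> norm (\<beta> n a + \<gamma> n a) * \<rho> ^ n * R ^ a)" using x h by simp
  qed
qed

lemma good_cmult:
  assumes "good \<rho>0 R0 \<beta>"
  shows "good \<rho>0 R0 (\<lambda>n a. c * \<beta> n a)"
  by (rule good_bound[OF assms, of "norm c"]) (auto simp: norm_mult)

lemma good_nmul: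
  assumes "good \<rho>0 R0 \<beta>"
  shows "good \<rho>0 R0 (\<lambda>n a. of_nat n * \<beta> n a)"
  unfolding good_def
proof (intro allI impI)
  fix \<rho> R :: real assume h: "0 \<le> \<rho>" "\<rho> < \<rho>0" "0 \<le> R" "R < R0"
  define \<rho>' where "\<rho>' = (\<rho> + \<rho>0) / 2"
  have h': "0 \<le> \<rho>'" "\<rho>' < \<rho>0" "\<rho> < \<rho>'" using h by (auto simp: \<rho>'_def)
  obtain C where C: "C \<ge> 0" "\<And>n. real n * \<rho> ^ n \<le> C * \<rho>' ^ n" using poly_geom[OF h(1) h'(3)] by blast
  have s: "(\<lambda>x. C * (case x of (n, a) \<Rightarrow> norm (\<beta> n a) * \<rho>' ^ n * R ^ a)) summable_on UNIV"
    by (intro summable_on_cmult_right goodD[OF assms(1) h'(1,2) h(3,4)])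
  show "(\<lambda>(n, a). norm (of_nat n * \<beta> n a) * \<rho> ^ n * R ^ a) summable_on UNIV"
  proof (rule summable_on_comparison_test[OF s])
    fix x :: "nat \<times> nat" obtain n a where x: "x = (n, a)" by fastforce
    have "norm (of_nat n * \<beta> n a) * \<rho> ^ n * R ^ a = norm (\<beta> n a) * R ^ a * (real n * \<rho> ^ n)"
      by (simp add: norm_mult)
    also have "\<dots> \<le> norm (\<beta> n a) * R ^ a * (C * \<rho>' ^ n)"
      using C(2)[of n] h by (intro mult_left_mono) auto
    finally show "(case x of (n, a) \<Rightarrow> norm (of_nat n * \<beta> n a) * \<rho> ^ n * R ^ a)
          \<le> C * (case x of (n, a) \<Rightarrow> norm (\<beta> n a) * \<rho>' ^ n * R ^ a)"
      using x by (simp add: algebra_simps)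
    show "0 \<le> (case x of (n, a) \<Rightarrow> norm (of_nat n * \<beta> n a) * \<rho> ^ n * R ^ a)" using x h by simp
  qed
qed

lemma good_amul:
  assumes "good \<rho>0 R0 \<beta>"
  shows "good \<rho>0 R0 (\<lambda>n a. of_nat a * \<beta> n a)"
  unfolding good_def
proof (intro allI impI)
  fix \<rho> R :: real assume h: "0 \<le> \<rho>" "\<rho> < \<rho>0" "0 \<le> R" "R < R0"
  define R' where "R' = (R + R0) / 2"
  have h': "0 \<le> R'" "R' < R0" "R < R'" using h by (auto simp: R'_def)
  obtain C where C: "C \<ge> 0" "\<And>n. real n * R ^ n \<le> C * R' ^ n" using poly_geom[OF h(3) h'(3)] by blast
  have s: "(\<lambda>x. C * (case x of (n, a) \<Rightarrow> norm (\<beta> n a) * \<rho> ^ n * R' ^ a)) summable_on UNIV"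
    by (intro summable_on_cmult_right goodD[OF assms(1) h(1,2) h'(1,2)])
  show "(\<lambda>(n, a). norm (of_nat a * \<beta> n a) * \<rho> ^ n * R ^ a) summable_on UNIV"
  proof (rule summable_on_comparison_test[OF s])
    fix x :: "nat \<times> nat" obtain n a where x: "x = (n, a)" by fastforce
    have "norm (of_nat a * \<beta> n a) * \<rho> ^ n * R ^ a = norm (\<beta> n a) * \<rho> ^ n * (real a * R ^ a)"
      by (simp add: norm_mult)
    also have "\<dots> \<le> norm (\<beta> n a) * \<rho> ^ n * (C * R' ^ a)"
      using C(2)[of a] h by (intro mult_left_mono) auto
    finally show "(case x of (n, a) \<Rightarrow> norm (of_nat a * \<beta> n a) * \<rho> ^ n * R ^ a)
          \<le> C * (case x of (n, a) \<Rightarrow> norm (\<beta> n a) * \<rho> ^ n * R' ^ a)"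
      using x by (simp add: algebra_simps)
    show "0 \<le> (case x of (n, a) \<Rightarrow> norm (of_nat a * \<beta> n a) * \<rho> ^ n * R ^ a)" using x h by simp
  qed
qed

lemma good_shift:
  assumes "good \<rho>0 R0 \<beta>"
  shows "good \<rho>0 R0 (\<lambda>n a. \<beta> n (Suc a))"
  unfolding good_def
proof (intro allI impI)
  fix \<rho> R :: real assume h: "0 \<le> \<rho>" "\<rho> < \<rho>0" "0 \<le> R" "R < R0"
  define R' where "R' = (R + R0) / 2"
  have h': "0 < R'" "R' < R0" "R \<le> R'" using h by (auto simp: R'_def)
  define g where "g = (\<lambda>(n, a). norm (\<beta> n a) * \<rho> ^ n * R' ^ a)"
  have g: "g summable_on UNIV" unfolding g_def using h' h by (intro goodD[OF assms]) auto
  have inj: "inj (\<lambda>(n::nat, a::nat). (n, Suc a))" by (auto simp: inj_def)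
  have "g summable_on ((\<lambda>(n::nat, a::nat). (n, Suc a)) ` UNIV)"
    by (rule summable_on_subset[OF g]) auto
  then have "(g \<circ> (\<lambda>(n::nat, a::nat). (n, Suc a))) summable_on UNIV"
    using summable_on_reindex[OF inj[unfolded inj_on_def[symmetric]]] by (metis inj summable_on_reindex)
  then have s: "(\<lambda>x. (1/R') * (g \<circ> (\<lambda>(n::nat, a::nat). (n, Suc a))) x) summable_on UNIV"
    by (intro summable_on_cmult_right)
  show "(\<lambda>(n, a). norm (\<beta> n (Suc a)) * \<rho> ^ n * R ^ a) summable_on UNIV"
  proof (rule summable_on_comparison_test[OF s])
    fix x :: "nat \<times> nat" obtain n a where x: "x = (n, a)" by fastforce
    have "norm (\<beta> n (Suc a)) * \<rho> ^ n * R ^ a \<le> norm (\<beta> n (Suc a)) * \<rho> ^ n * R' ^ a"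
      using h h' by (intro mult_left_mono power_mono) auto
    also have "\<dots> = (1/R') * (norm (\<beta> n (Suc a)) * \<rho> ^ n * R' ^ Suc a)" using h' by simp
    finally show "(case x of (n, a) \<Rightarrow> norm (\<beta> n (Suc a)) * \<rho> ^ n * R ^ a)
          \<le> (1/R') * (g \<circ> (\<lambda>(n::nat, a::nat). (n, Suc a))) x"
      using x by (simp add: g_def)
    show "0 \<le> (case x of (n, a) \<Rightarrow> norm (\<beta> n (Suc a)) * \<rho> ^ n * R ^ a)" using x h by simp
  qed
qed

lemma nat_infsum:
  fixes f :: "nat \<Rightarrow> complex"
  assumes "f summable_on UNIV"
  shows "summable f \<and> infsum f UNIV = suminf f"
proof -
  have "(f has_sum infsum f UNIV) UNIV" using assms by (simp add: summable_iff_has_sum_infsum[symmetric])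
  then have "f sums infsum f UNIV" by (rule has_sum_imp_sums)
  then show ?thesis by (simp add: sums_summable sums_unique)
qed

lemma good_fam:
  assumes "good \<rho>0 R0 \<beta>" "norm q < \<rho>0" "norm w < R0"
  shows "(\<lambda>(n, a). \<beta> n a * q ^ n * w ^ a) summable_on UNIV"
proof -
  have "(\<lambda>(n, a). norm (\<beta> n a) * norm q ^ n * norm w ^ a) summable_on UNIV"
    using assms by (intro goodD) auto
  then have "(\<lambda>x. norm ((\<lambda>(n, a). \<beta> n a * q ^ n * w ^ a) x)) summable_on UNIV"
    by (rule summable_on_cong[THEN iffD1, rotated]) (auto simp: norm_mult norm_power)
  then show ?thesis by (simp add: summable_on_iff_abs_summable_on_complex)
qed

lemma good_row:
  assumes "good \<rho>0 R0 \<beta>" "0 < \<rho>0" "norm w < R0"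
  shows "summable (\<lambda>a. \<beta> n a * w ^ a)"
proof -
  define q :: complex where "q = of_real (\<rho>0 / 2)"
  have q: "norm q < \<rho>0" "q \<noteq> 0" using assms(2) by (auto simp: q_def)
  have S: "(\<lambda>(n, a). \<beta> n a * q ^ n * w ^ a) summable_on Sigma UNIV (\<lambda>_. UNIV)"
    using good_fam[OF assms(1) q(1) assms(3)] by simp
  have "(\<lambda>a. \<beta> n a * q ^ n * w ^ a) summable_on UNIV" using summable_on_SigmaD1[OF S] by simp
  then have "summable (\<lambda>a. \<beta> n a * q ^ n * w ^ a)" using nat_infsum by blast
  then have "summable (\<lambda>a. (\<beta> n a * q ^ n * w ^ a) * inverse (q ^ n))" by (rule summable_mult2)
  then show ?thesis using q(2) by (simp add: field_simps)
qed

lemma good_col: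
  assumes "good \<rho>0 R0 \<beta>" "0 < R0" "norm q < \<rho>0"
  shows "summable (\<lambda>n. \<beta> n a * q ^ n)"
proof -
  define w :: complex where "w = of_real (R0 / 2)"
  have w: "norm w < R0" "w \<noteq> 0" using assms(2) by (auto simp: w_def)
  have S: "(\<lambda>(a, n). \<beta> n a * q ^ n * w ^ a) summable_on Sigma UNIV (\<lambda>_. UNIV)"
    using good_fam[OF assms(1) assms(3) w(1)] summable_on_swap[of "\<lambda>(n, a). \<beta> n a * q ^ n * w ^ a" UNIV UNIV]
    by (simp add: case_prod_unfold)
  have "(\<lambda>n. \<beta> n a * q ^ n * w ^ a) summable_on UNIV" using summable_on_SigmaD1[OF S] by simp
  then have "summable (\<lambda>n. \<beta> n a * q ^ n * w ^ a)" using nat_infsum by blast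
  then have "summable (\<lambda>n. (\<beta> n a * q ^ n * w ^ a) * inverse (w ^ a))" by (rule summable_mult2)
  then show ?thesis using w(2) by (simp add: field_simps)
qed

lemma Fw_swap:
  assumes "good \<rho>0 R0 \<beta>" "norm q < \<rho>0" "norm w < R0"
  shows "((\<lambda>(n, a). \<beta> n a * q ^ n * w ^ a) has_sum Fw \<beta> q w) UNIV"
    and "Fw \<beta> q w = (\<Sum>n. (\<Sum>a. \<beta> n a * w ^ a) * q ^ n)"
    and "summable (\<lambda>n. (\<Sum>a. \<beta> n a * w ^ a) * q ^ n)"
    and "summable (\<lambda>a. gq \<beta> a q * w ^ a)"
    and "\<And>a. summable (\<lambda>n. \<beta> n a * q ^ n)"
    and "\<And>n. summable (\<lambda>a. \<beta> n a * w ^ a)"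
proof -
  have p: "0 < \<rho>0" "0 < R0" using assms(2,3) norm_ge_zero[of q] norm_ge_zero[of w] by linarith+
  show sm1: "\<And>n. summable (\<lambda>a. \<beta> n a * w ^ a)" using good_row[OF assms(1) p(1) assms(3)] .
  show sm2: "\<And>a. summable (\<lambda>n. \<beta> n a * q ^ n)" using good_col[OF assms(1) p(2) assms(2)] .
  define f where "f = (\<lambda>n a. \<beta> n a * q ^ n * w ^ a)"
  have S: "(\<lambda>(n, a). f n a) summable_on Sigma UNIV (\<lambda>_. UNIV)"
    using good_fam[OF assms] by (simp add: f_def)
  have S': "(\<lambda>(a, n). f n a) summable_on Sigma UNIV (\<lambda>_. UNIV)"
    using S summable_on_swap[of "\<lambda>(n, a). f n a" UNIV UNIV] by (simp add: case_prod_unfold)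
  have in1: "f n summable_on UNIV" for n using summable_on_SigmaD1[OF S] by simp
  have in2: "(\<lambda>n. f n a) summable_on UNIV" for a using summable_on_SigmaD1[OF S'] by simp
  have o1: "(\<lambda>n. infsum (f n) UNIV) summable_on UNIV" using summable_on_Sigma_banach[OF S] by simp
  have o2: "(\<lambda>a. infsum (\<lambda>n. f n a) UNIV) summable_on UNIV" using summable_on_Sigma_banach[OF S'] by simp
  have e1: "infsum (\<lambda>n. infsum (f n) UNIV) UNIV = infsum (\<lambda>(n, a). f n a) UNIV"
    using infsum_Sigma'_banach[OF S] by simp
  have e2: "infsum (\<lambda>a. infsum (\<lambda>n. f n a) UNIV) UNIV = infsum (\<lambda>(n, a). f n a) UNIV"
    using infsum_swap_banach[of "\<lambda>n a. f n a" UNIV UNIV] S e1 by simp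
  have i1: "infsum (f n) UNIV = (\<Sum>a. \<beta> n a * w ^ a) * q ^ n" for n
  proof -
    from nat_infsum[OF in1[of n]] have "infsum (f n) UNIV = suminf (f n)" by auto
    moreover have "f n = (\<lambda>a. (\<beta> n a * w ^ a) * q ^ n)" by (auto simp: f_def fun_eq_iff algebra_simps)
    ultimately show ?thesis using suminf_mult2[OF sm1[of n]] by simp
  qed
  have i2: "infsum (\<lambda>n. f n a) UNIV = gq \<beta> a q * w ^ a" for a
  proof -
    from nat_infsum[OF in2[of a]] have "infsum (\<lambda>n. f n a) UNIV = suminf (\<lambda>n. f n a)" by auto
    moreover have "(\<lambda>n. f n a) = (\<lambda>n. (\<beta> n a * q ^ n) * w ^ a)" by (auto simp: f_def fun_eq_iff algebra_simps)
    ultimately show ?thesis using suminf_mult2[OF sm2[of a]] by (simp add: gq_def)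
  qed
  have O1: "summable (\<lambda>n. (\<Sum>a. \<beta> n a * w ^ a) * q ^ n)"
    and O1': "infsum (\<lambda>n. infsum (f n) UNIV) UNIV = (\<Sum>n. (\<Sum>a. \<beta> n a * w ^ a) * q ^ n)"
    using nat_infsum[OF o1] by (simp_all add: i1)
  have O2: "summable (\<lambda>a. gq \<beta> a q * w ^ a)"
    and O2': "infsum (\<lambda>a. infsum (\<lambda>n. f n a) UNIV) UNIV = Fw \<beta> q w"
    using nat_infsum[OF o2] by (simp_all add: i2 Fw_def)
  show "summable (\<lambda>n. (\<Sum>a. \<beta> n a * w ^ a) * q ^ n)" by (fact O1)
  show "summable (\<lambda>a. gq \<beta> a q * w ^ a)" by (fact O2)
  show "Fw \<beta> q w = (\<Sum>n. (\<Sum>a. \<beta> n a * w ^ a) * q ^ n)" using O1' O2' e1 e2 by simp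
  have "((\<lambda>(n, a). f n a) has_sum infsum (\<lambda>(n, a). f n a) UNIV) UNIV"
    using S by (simp add: summable_iff_has_sum_infsum[symmetric])
  then show "((\<lambda>(n, a). \<beta> n a * q ^ n * w ^ a) has_sum Fw \<beta> q w) UNIV"
    using O2' e2 by (simp add: f_def)
qed

lemma e_mult: "e (of_nat n * t) = e t ^ n"
proof -
  have "e (of_nat n * t) = exp (of_nat n * (2 * complex_of_real pi * \<i> * t))"
    by (simp add: e_def algebra_simps)
  also have "\<dots> = e t ^ n" by (simp add: exp_of_nat_mult e_def)
  finally show ?thesis .
qed

lemma e_deriv: "(e has_field_derivative (2 * complex_of_real pi * \<i> * e t)) (at t)"
  unfolding e_def by (auto intro!: derivative_eq_intros)

lemma norm_e: "norm (e t) = exp (- 2 * pi * Im t)"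
  by (simp add: e_def)

lemma cont_e: "continuous_on UNIV e"
  unfolding e_def by (intro continuous_intros)

lemma qser_deriv:
  assumes sm: "\<And>q. norm q < \<rho>0 \<Longrightarrow> summable (\<lambda>n. c n * q ^ n)" and t: "norm (e t) < \<rho>0"
  shows "((\<lambda>s. \<Sum>n. c n * e s ^ n) has_field_derivative
           (\<Sum>n. (2 * complex_of_real pi * \<i> * of_nat n) * c n * e t ^ n)) (at t)"
proof -
  define q where "q = e t"
  have D1: "((\<lambda>x. \<Sum>n. c n * x ^ n) has_field_derivative (\<Sum>n. diffs c n * q ^ n)) (at q)"
    using termdiffs_strong'[of \<rho>0 c q] sm t by (simp add: q_def)
  have D: "((\<lambda>s. \<Sum>n. c n * e s ^ n) has_field_derivative (\<Sum>n. diffs c n * q ^ n) * (2 * complex_of_real pi * \<i> * e t)) (at t)"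
    using DERIV_chain2[OF D1[unfolded q_def] e_deriv] by (simp add: q_def)
  have sd: "summable (\<lambda>n. diffs c n * q ^ n)" using termdiff_converges[of q \<rho>0 c] sm t by (simp add: q_def)
  define f where "f = (\<lambda>n. of_nat n * c n * q ^ n)"
  have fS: "f (Suc n) = q * (diffs c n * q ^ n)" for n by (simp add: f_def diffs_def algebra_simps)
  have "summable (\<lambda>n. f (Suc n))" unfolding fS by (intro summable_mult sd)
  then have sf: "summable f" by (simp add: summable_Suc_iff)
  have "(\<Sum>n. f n) = (\<Sum>n. f (Suc n))" using suminf_split_head[OF sf] by (simp add: f_def)
  also have "\<dots> = q * (\<Sum>n. diffs c n * q ^ n)" unfolding fS by (rule suminf_mult[OF sd])
  finally have eq: "(\<Sum>n. diffs c n * q ^ n) * (2 * complex_of_real pi * \<i> * e t)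
      = (2 * complex_of_real pi * \<i>) * (\<Sum>n. f n)" by (simp add: q_def algebra_simps)
  also have "\<dots> = (\<Sum>n. (2 * complex_of_real pi * \<i> * of_nat n) * c n * e t ^ n)"
    using suminf_mult[OF sf, of "2 * complex_of_real pi * \<i>"] by (simp add: f_def q_def algebra_simps)
  finally show ?thesis using D by simp
qed

definition Dt :: "(nat \<Rightarrow> nat \<Rightarrow> complex) \<Rightarrow> nat \<Rightarrow> nat \<Rightarrow> complex" where
  "Dt \<beta> n a = 2 * complex_of_real pi * \<i> * of_nat n * \<beta> n a"

definition Dw :: "(nat \<Rightarrow> nat \<Rightarrow> complex) \<Rightarrow> nat \<Rightarrow> nat \<Rightarrow> complex" where
  "Dw \<beta> n a = of_nat (Suc a) * \<beta> n (Suc a)"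

lemma good_Dt: "good \<rho>0 R0 \<beta> \<Longrightarrow> good \<rho>0 R0 (Dt \<beta>)"
  using good_cmult[OF good_nmul, of \<rho>0 R0 \<beta> "2 * complex_of_real pi * \<i>"]
  by (simp add: Dt_def[abs_def] mult.assoc)

lemma good_Dw: "good \<rho>0 R0 \<beta> \<Longrightarrow> good \<rho>0 R0 (Dw \<beta>)"
proof -
  assume g: "good \<rho>0 R0 \<beta>"
  have "good \<rho>0 R0 (\<lambda>n a. of_nat a * \<beta> n (Suc a) + \<beta> n (Suc a))"
    by (intro good_add good_amul good_shift g)
  then show ?thesis by (simp add: Dw_def[abs_def] algebra_simps)
qed

lemma gq_Dt:
  assumes "good \<rho>0 R0 \<beta>" "norm q < \<rho>0" "0 < R0"
  shows "gq (Dt \<beta>) a q = (\<Sum>n. (2 * complex_of_real pi * \<i> * of_nat n) * \<beta> n a * q ^ n)"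
  by (simp add: gq_def Dt_def)

lemma gq_deriv:
  assumes "good \<rho>0 R0 \<beta>" "norm (e t) < \<rho>0" "0 < R0"
  shows "((\<lambda>s. gq \<beta> a (e s)) has_field_derivative gq (Dt \<beta>) a (e t)) (at t)"
  using qser_deriv[of \<rho>0 "\<lambda>n. \<beta> n a" t] good_col[OF assms(1,3)] assms(2)
  by (simp add: gq_def Dt_def)

lemma Fw_dt:
  assumes g: "good \<rho>0 R0 \<beta>" and t: "norm (e t) < \<rho>0" and w: "norm w < R0"
  shows "((\<lambda>s. Fw \<beta> (e s) w) has_field_derivative Fw (Dt \<beta>) (e t) w) (at t)"
proof -
  define c where "c = (\<lambda>n. \<Sum>a. \<beta> n a * w ^ a)"
  have sm: "summable (\<lambda>n. c n * q ^ n)" if "norm q < \<rho>0" for q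
    using Fw_swap(3)[OF g that w] by (simp add: c_def)
  have D: "((\<lambda>s. \<Sum>n. c n * e s ^ n) has_field_derivative
           (\<Sum>n. (2 * complex_of_real pi * \<i> * of_nat n) * c n * e t ^ n)) (at t)"
    by (rule qser_deriv[OF sm t])
  have U: "open {s. norm (e s) < \<rho>0}"
    unfolding e_def by (intro open_Collect_less continuous_intros)
  have D2: "((\<lambda>s. Fw \<beta> (e s) w) has_field_derivative
           (\<Sum>n. (2 * complex_of_real pi * \<i> * of_nat n) * c n * e t ^ n)) (at t)"
    by (rule has_field_derivative_transform_within_open[OF D U]) (use t Fw_swap(2)[OF g _ w] in \<open>auto simp: c_def\<close>)
  have "Fw (Dt \<beta>) (e t) w = (\<Sum>n. (\<Sum>a. Dt \<beta> n a * w ^ a) * e t ^ n)"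
    using Fw_swap(2)[OF good_Dt[OF g] t w] .
  also have "\<dots> = (\<Sum>n. (2 * complex_of_real pi * \<i> * of_nat n) * c n * e t ^ n)"
  proof (intro suminf_cong)
    fix n
    have "(\<Sum>a. Dt \<beta> n a * w ^ a) = (2 * complex_of_real pi * \<i> * of_nat n) * c n"
      unfolding c_def using suminf_mult[OF Fw_swap(6)[OF g t w, of n], of "2 * complex_of_real pi * \<i> * of_nat n"]
      by (simp add: Dt_def algebra_simps)
    then show "(\<Sum>a. Dt \<beta> n a * w ^ a) * e t ^ n = (2 * complex_of_real pi * \<i> * of_nat n) * c n * e t ^ n" by simp
  qed
  finally show ?thesis using D2 by simp
qed

lemma Fw_dw:
  assumes g: "good \<rho>0 R0 \<beta>" and q: "norm q < \<rho>0" and w: "norm w < R0"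
  shows "((\<lambda>w. Fw \<beta> q w) has_field_derivative Fw (Dw \<beta>) q w) (at w)"
proof -
  have sm: "summable (\<lambda>a. gq \<beta> a q * z ^ a)" if "norm z < R0" for z
    using Fw_swap(4)[OF g q that] .
  have D: "((\<lambda>z. \<Sum>a. gq \<beta> a q * z ^ a) has_field_derivative (\<Sum>a. diffs (\<lambda>a. gq \<beta> a q) a * w ^ a)) (at w)"
    by (rule termdiffs_strong'[OF sm w])
  have "diffs (\<lambda>a. gq \<beta> a q) a = gq (Dw \<beta>) a q" for a
    unfolding diffs_def gq_def Dw_def
    using suminf_mult[OF Fw_swap(5)[OF g q w, of "Suc a"], of "of_nat (Suc a)"]
    by (simp add: algebra_simps)
  then show ?thesis using D by (simp add: Fw_def[abs_def])
qed

lemma Fw_lin: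
  assumes g1: "good \<rho>0 R0 \<beta>1" and g2: "good \<rho>0 R0 \<beta>2" and q: "norm q < \<rho>0" and w: "norm w < R0"
  shows "Fw (\<lambda>n a. x * \<beta>1 n a + y * \<beta>2 n a) q w = x * Fw \<beta>1 q w + y * Fw \<beta>2 q w"
proof -
  have g: "good \<rho>0 R0 (\<lambda>n a. x * \<beta>1 n a + y * \<beta>2 n a)"
    by (intro good_add good_cmult g1 g2)
  have h1: "((\<lambda>(n, a). x * (\<beta>1 n a * q ^ n * w ^ a)) has_sum x * Fw \<beta>1 q w) UNIV"
    using has_sum_cmult_right[OF Fw_swap(1)[OF g1 q w], of x] by (simp add: case_prod_unfold)
  have h2: "((\<lambda>(n, a). y * (\<beta>2 n a * q ^ n * w ^ a)) has_sum y * Fw \<beta>2 q w) UNIV"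
    using has_sum_cmult_right[OF Fw_swap(1)[OF g2 q w], of y] by (simp add: case_prod_unfold)
  have "((\<lambda>(n, a). (x * \<beta>1 n a + y * \<beta>2 n a) * q ^ n * w ^ a) has_sum (x * Fw \<beta>1 q w + y * Fw \<beta>2 q w)) UNIV"
    using has_sum_add[OF h1 h2] by (simp add: case_prod_unfold algebra_simps)
  then show ?thesis using Fw_swap(1)[OF g q w] has_sum_unique by blast
qed

lemma Fw_amul:
  assumes g: "good \<rho>0 R0 \<delta>" and q: "norm q < \<rho>0" and w: "norm w < R0"
  shows "Fw (\<lambda>n a. of_nat a * \<delta> n a) q w = w * Fw (Dw \<delta>) q w"
proof -
  have g': "good \<rho>0 R0 (\<lambda>n a. of_nat a * \<delta> n a)" by (rule good_amul[OF g])
  have R0: "0 < R0" using w norm_ge_zero[of w] by linarith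
  have gq1: "gq (\<lambda>n a. of_nat a * \<delta> n a) a q = of_nat a * gq \<delta> a q" for a
    unfolding gq_def using suminf_mult[OF good_col[OF g R0 q, of a], of "of_nat a"] by (simp add: algebra_simps)
  have gq2: "gq (Dw \<delta>) a q = of_nat (Suc a) * gq \<delta> (Suc a) q" for a
    unfolding gq_def Dw_def using suminf_mult[OF good_col[OF g R0 q, of "Suc a"], of "of_nat (Suc a)"] by (simp add: algebra_simps)
  define f where "f = (\<lambda>a. of_nat a * gq \<delta> a q * w ^ a)"
  have sf: "summable f" using Fw_swap(4)[OF g' q w] by (simp add: f_def gq1)
  have fS: "f (Suc a) = w * (gq (Dw \<delta>) a q * w ^ a)" for a by (simp add: f_def gq2 algebra_simps)
  have "Fw (\<lambda>n a. of_nat a * \<delta> n a) q w = (\<Sum>a. f a)" by (simp add: Fw_def f_def gq1)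
  also have "\<dots> = (\<Sum>a. f (Suc a))" using suminf_split_head[OF sf] by (simp add: f_def)
  also have "\<dots> = w * Fw (Dw \<delta>) q w" unfolding fS Fw_def by (rule suminf_mult[OF Fw_swap(4)[OF good_Dw[OF g] q w]])
  finally show ?thesis .
qed

definition step :: "complex \<Rightarrow> int \<Rightarrow> (nat \<Rightarrow> nat \<Rightarrow> complex) \<Rightarrow> nat \<Rightarrow> nat \<Rightarrow> complex" where
  "step A c \<beta> n a = A * Dt \<beta> n a - 4 * of_nat (Suc a) * (of_nat a + of_int c) * \<beta> n (Suc a)"

lemma step_alt: "step A c \<beta> = (\<lambda>n a. A * Dt \<beta> n a + (- 4 * of_int c) * Dw \<beta> n a + (-4) * (of_nat a * Dw \<beta> n a))"
  by (auto simp: fun_eq_iff step_def Dw_def algebra_simps)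

lemma good_step: "good \<rho>0 R0 \<beta> \<Longrightarrow> good \<rho>0 R0 (step A c \<beta>)"
  unfolding step_alt by (intro good_add good_cmult good_Dt good_Dw good_amul)

lemma Fw_step:
  assumes g: "good \<rho>0 R0 \<beta>" and q: "norm q < \<rho>0" and w: "norm w < R0"
  shows "Fw (step A c \<beta>) q w = A * Fw (Dt \<beta>) q w - 4 * of_int c * Fw (Dw \<beta>) q w - 4 * w * Fw (Dw (Dw \<beta>)) q w"
proof -
  have gs: "good \<rho>0 R0 (\<lambda>n a. A * Dt \<beta> n a + (- 4 * of_int c) * Dw \<beta> n a)"
    by (intro good_add good_cmult good_Dt good_Dw g)
  have "Fw (step A c \<beta>) q w = Fw (\<lambda>n a. 1 * (A * Dt \<beta> n a + (- 4 * of_int c) * Dw \<beta> n a) + (-4) * (of_nat a * Dw \<beta> n a)) q w"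
    unfolding step_alt by simp
  also have "\<dots> = Fw (\<lambda>n a. A * Dt \<beta> n a + (- 4 * of_int c) * Dw \<beta> n a) q w + (-4) * Fw (\<lambda>n a. of_nat a * Dw \<beta> n a) q w"
    using Fw_lin[OF gs good_amul[OF good_Dw[OF g]] q w, of 1 "-4"] by simp
  also have "Fw (\<lambda>n a. A * Dt \<beta> n a + (- 4 * of_int c) * Dw \<beta> n a) q w = A * Fw (Dt \<beta>) q w + (- 4 * of_int c) * Fw (Dw \<beta>) q w"
    by (rule Fw_lin[OF good_Dt[OF g] good_Dw[OF g] q w])
  also have "Fw (\<lambda>n a. of_nat a * Dw \<beta> n a) q w = w * Fw (Dw (Dw \<beta>)) q w"
    by (rule Fw_amul[OF good_Dw[OF g] q w])
  finally show ?thesis by (simp add: algebra_simps)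
qed

lemma open_U: "open {s. norm (e s) < \<rho>0}"
  unfolding e_def by (intro open_Collect_less continuous_intros)

lemma pd_z2_G:
  assumes g: "good \<rho>0 R0 \<beta>"
    and G: "\<And>s z1 z2. norm (e s) < \<rho>0 \<Longrightarrow> z1 \<noteq> 0 \<Longrightarrow> z2 \<noteq> 0 \<Longrightarrow> norm (z1 * z2) < R0 \<Longrightarrow> G s z1 z2 = Fw \<beta> (e s) (z1 * z2)"
    and t: "norm (e t) < \<rho>0" and z: "z1 \<noteq> 0" "z2 \<noteq> 0" "norm (z1 * z2) < R0"
  shows "pd_z2 G t z1 z2 = z1 * Fw (Dw \<beta>) (e t) (z1 * z2)"
proof -
  have op: "open {s. s \<noteq> 0 \<and> norm (z1 * s) < R0}" by (intro open_Collect_conj open_Collect_neq open_Collect_less continuous_intros)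
  have ev: "eventually (\<lambda>s. G t z1 s = Fw \<beta> (e t) (z1 * s)) (nhds z2)"
    using eventually_nhds_in_open[OF op, of z2] z by (auto elim!: eventually_mono simp: G t z)
  have D: "((\<lambda>s. Fw \<beta> (e t) (z1 * s)) has_field_derivative Fw (Dw \<beta>) (e t) (z1 * z2) * z1) (at z2)"
    by (rule DERIV_chain2[where f="Fw \<beta> (e t)" and g="\<lambda>s. z1 * s", OF Fw_dw[OF g t z(3)]]) (auto intro!: derivative_eq_intros)
  show ?thesis unfolding pd_z2_def using deriv_cong_ev[OF ev refl] DERIV_imp_deriv[OF D] by simp
qed

lemma pd_z1_G:
  assumes g: "good \<rho>0 R0 \<beta>"
    and G: "\<And>s z1 z2. norm (e s) < \<rho>0 \<Longrightarrow> z1 \<noteq> 0 \<Longrightarrow> z2 \<noteq> 0 \<Longrightarrow> norm (z1 * z2) < R0 \<Longrightarrow> G s z1 z2 = Fw \<beta> (e s) (z1 * z2)"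
    and t: "norm (e t) < \<rho>0" and z: "z1 \<noteq> 0" "z2 \<noteq> 0" "norm (z1 * z2) < R0"
  shows "pd_z1 G t z1 z2 = z2 * Fw (Dw \<beta>) (e t) (z1 * z2)"
proof -
  have op: "open {s. s \<noteq> 0 \<and> norm (s * z2) < R0}" by (intro open_Collect_conj open_Collect_neq open_Collect_less continuous_intros)
  have ev: "eventually (\<lambda>s. G t s z2 = Fw \<beta> (e t) (s * z2)) (nhds z1)"
    using eventually_nhds_in_open[OF op, of z1] z by (auto elim!: eventually_mono simp: G t z)
  have D: "((\<lambda>s. Fw \<beta> (e t) (s * z2)) has_field_derivative Fw (Dw \<beta>) (e t) (z1 * z2) * z2) (at z1)"
    by (rule DERIV_chain2[where f="Fw \<beta> (e t)" and g="\<lambda>s. s * z2", OF Fw_dw[OF g t z(3)]]) (auto intro!: derivative_eq_intros)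
  show ?thesis unfolding pd_z1_def using deriv_cong_ev[OF ev refl] DERIV_imp_deriv[OF D] by simp
qed

lemma pd_tau_G:
  assumes g: "good \<rho>0 R0 \<beta>"
    and G: "\<And>s z1 z2. norm (e s) < \<rho>0 \<Longrightarrow> z1 \<noteq> 0 \<Longrightarrow> z2 \<noteq> 0 \<Longrightarrow> norm (z1 * z2) < R0 \<Longrightarrow> G s z1 z2 = Fw \<beta> (e s) (z1 * z2)"
    and t: "norm (e t) < \<rho>0" and z: "z1 \<noteq> 0" "z2 \<noteq> 0" "norm (z1 * z2) < R0"
  shows "pd_tau G t z1 z2 = Fw (Dt \<beta>) (e t) (z1 * z2)"
proof -
  have ev: "eventually (\<lambda>s. G s z1 z2 = Fw \<beta> (e s) (z1 * z2)) (nhds t)"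
    using eventually_nhds_in_open[OF open_U, of t \<rho>0] t by (auto elim!: eventually_mono simp: G z)
  show ?thesis unfolding pd_tau_def using deriv_cong_ev[OF ev refl] DERIV_imp_deriv[OF Fw_dt[OF g t z(3)]] by simp
qed

lemma pd_z1z2_G:
  assumes g: "good \<rho>0 R0 \<beta>"
    and G: "\<And>s z1 z2. norm (e s) < \<rho>0 \<Longrightarrow> z1 \<noteq> 0 \<Longrightarrow> z2 \<noteq> 0 \<Longrightarrow> norm (z1 * z2) < R0 \<Longrightarrow> G s z1 z2 = Fw \<beta> (e s) (z1 * z2)"
    and t: "norm (e t) < \<rho>0" and z: "z1 \<noteq> 0" "z2 \<noteq> 0" "norm (z1 * z2) < R0"
  shows "pd_z1 (pd_z2 G) t z1 z2 = Fw (Dw \<beta>) (e t) (z1 * z2) + z1 * z2 * Fw (Dw (Dw \<beta>)) (e t) (z1 * z2)"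
proof -
  have op: "open {s. s \<noteq> 0 \<and> norm (s * z2) < R0}" by (intro open_Collect_conj open_Collect_neq open_Collect_less continuous_intros)
  have ev: "eventually (\<lambda>s. pd_z2 G t s z2 = s * Fw (Dw \<beta>) (e t) (s * z2)) (nhds z1)"
    using eventually_nhds_in_open[OF op, of z1] z by (auto elim!: eventually_mono simp: pd_z2_G[OF g G t] z)
  have D0: "((\<lambda>s. Fw (Dw \<beta>) (e t) (s * z2)) has_field_derivative Fw (Dw (Dw \<beta>)) (e t) (z1 * z2) * z2) (at z1)"
    by (rule DERIV_chain2[where f="Fw (Dw \<beta>) (e t)" and g="\<lambda>s. s * z2", OF Fw_dw[OF good_Dw[OF g] t z(3)]]) (auto intro!: derivative_eq_intros)
  have D: "((\<lambda>s. s * Fw (Dw \<beta>) (e t) (s * z2)) has_field_derivative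
      Fw (Dw \<beta>) (e t) (z1 * z2) + z1 * z2 * Fw (Dw (Dw \<beta>)) (e t) (z1 * z2)) (at z1)"
    using DERIV_mult[OF DERIV_ident D0] by (simp add: algebra_simps)
  show ?thesis unfolding pd_z1_def[of "pd_z2 G"] using deriv_cong_ev[OF ev refl] DERIV_imp_deriv[OF D] by simp
qed

lemma L_step:
  assumes g: "good \<rho>0 R0 \<beta>"
    and G: "\<And>s z1 z2. norm (e s) < \<rho>0 \<Longrightarrow> z1 \<noteq> 0 \<Longrightarrow> z2 \<noteq> 0 \<Longrightarrow> norm (z1 * z2) < R0 \<Longrightarrow> G s z1 z2 = Fw \<beta> (e s) (z1 * z2)"
    and t: "norm (e t) < \<rho>0" and z: "z1 \<noteq> 0" "z2 \<noteq> 0" "norm (z1 * z2) < R0"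
  shows "L_op c m G t z1 z2 = Fw (step (8 * complex_of_real pi * \<i> * of_nat m) c \<beta>) (e t) (z1 * z2)"
  using z by (simp add: L_op_def pd_tau_G[OF g G t z] pd_z1_G[OF g G t z] pd_z2_G[OF g G t z] pd_z1z2_G[OF g G t z]
    Fw_step[OF g t z(3)] field_simps)

definition Kc :: "nat \<Rightarrow> nat \<Rightarrow> nat \<Rightarrow> nat \<Rightarrow> complex" where
  "Kc k j \<mu> a = of_nat (j choose \<mu>) * (-4) ^ (j - \<mu>) * pochhammer (of_nat a + 1) (j - \<mu>)
     * pochhammer (of_nat (a + k + j) - 1) (j - \<mu>)"

lemma binom_aux: "i < j \<Longrightarrow> (j choose i) * (j - i) = (j choose Suc i) * Suc i"
proof -
  assume "i < j"
  have 1: "Suc j * (j choose i) = (Suc j choose Suc i) * Suc i" by (rule Suc_times_binomial_eq)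
  have 2: "(Suc j choose Suc i) = (j choose i) + (j choose Suc i)" by simp
  from 1 2 have "Suc j * (j choose i) = (j choose i) * Suc i + (j choose Suc i) * Suc i"
    by (simp add: algebra_simps)
  then have "(j choose i) * (Suc j - Suc i) = (j choose Suc i) * Suc i"
    by (simp add: diff_mult_distrib2 algebra_simps)
  then show ?thesis by simp
qed

lemma K_alg:
  fixes b0 b1 Q A1 P1 P2 X D I :: complex
  assumes "b0 * (D + 1) = b1 * (I + 1)"
  shows "(b0 + b1) * ((-4) * Q) * (A1 * P1) * (P2 * (X + D))
     = b0 * ((-4) * Q) * (A1 * P1) * ((X - 1) * P2) - 4 * A1 * (X + I + (D + 1)) * (b1 * Q * P1 * P2)"
proof -
  have "(b0 + b1) * (X + D) - (b0 * (X - 1) + b1 * (X + I + (D + 1))) = b0 * (D + 1) - b1 * (I + 1)"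
    by (simp add: algebra_simps)
  then have "(b0 + b1) * (X + D) - (b0 * (X - 1) + b1 * (X + I + (D + 1))) = 0" using assms by simp
  then have "(b0 + b1) * (X + D) = b0 * (X - 1) + b1 * (X + I + (D + 1))" by (simp only: right_minus_eq)
  then have "(-4 * Q * A1 * P1 * P2) * ((b0 + b1) * (X + D)) = (-4 * Q * A1 * P1 * P2) * (b0 * (X - 1) + b1 * (X + I + (D + 1)))"
    by simp
  then show ?thesis using assms by algebra
qed

lemma K_rec:
  assumes "\<mu> \<le> Suc j"
  shows "Kc k (Suc j) \<mu> a = (if \<mu> = 0 then 0 else Kc k j (\<mu> - 1) a)
           - 4 * of_nat (Suc a) * of_nat (a + k + 2 * j) * Kc k j \<mu> (Suc a)"
proof (cases \<mu>)
  case 0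
  have X: "of_nat (a + k + Suc j) - 1 = (of_nat (a + k + j) :: complex)" by simp
  have X2: "of_nat (Suc a + k + j) - 1 = (of_nat (a + k + j) :: complex)" by simp
  define P1 where "P1 = pochhammer (of_nat a + 2 :: complex) j"
  define P2 where "P2 = pochhammer (of_nat (a + k + j) :: complex) j"
  have e1: "pochhammer (of_nat a + 1 :: complex) (Suc j) = (of_nat a + 1) * P1"
    by (simp add: P1_def pochhammer_rec add.assoc)
  have e2: "pochhammer (of_nat (a + k + j) :: complex) (Suc j) = P2 * (of_nat (a + k + j) + of_nat j)"
    by (simp add: P2_def pochhammer_Suc)
  have e4: "pochhammer (of_nat (Suc a) + 1 :: complex) j = P1" by (simp add: P1_def add.assoc add.commute)
  have "Kc k (Suc j) \<mu> a = (-4) ^ Suc j * ((of_nat a + 1) * P1) * (P2 * (of_nat (a + k + j) + of_nat j))"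
    unfolding Kc_def 0 X diff_zero e1 e2 by simp
  moreover have "Kc k j \<mu> (Suc a) = (-4) ^ j * P1 * P2"
    unfolding Kc_def 0 X2 diff_zero e4 P2_def by simp
  moreover have "of_nat (a + k + 2 * j) = (of_nat (a + k + j) + of_nat j :: complex)" by simp
  moreover have "of_nat (Suc a) = (of_nat a + 1 :: complex)" by simp
  ultimately show ?thesis using 0 by (simp del: of_nat_add of_nat_Suc)
next
  case (Suc i)
  have X: "of_nat (a + k + Suc j) - 1 = (of_nat (a + k + j) :: complex)" by simp
  have X2: "of_nat (Suc a + k + j) - 1 = (of_nat (a + k + j) :: complex)" by simp
  show ?thesis
  proof (cases "i = j")
    case True
    then show ?thesis unfolding Suc Kc_def by simp
  next
    case False
    with assms Suc have ij: "i < j" by simp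
    then obtain d where d: "j = i + Suc d" using less_iff_Suc_add[of i j] by auto
    have jd1: "Suc j - Suc i = Suc d" "j - i = Suc d" "j - Suc i = d" using d by auto
    have b: "(j choose i) * Suc d = (j choose Suc i) * Suc i" using binom_aux[OF ij] unfolding jd1(2) .
    have b': "of_nat (j choose i) * of_nat (Suc d) = (of_nat (j choose Suc i) * of_nat (Suc i) :: complex)"
      by (simp only: of_nat_mult[symmetric] b)
    define P1 where "P1 = pochhammer (of_nat a + 2 :: complex) d"
    define P2 where "P2 = pochhammer (of_nat (a + k + j) :: complex) d"
    have e1: "pochhammer (of_nat a + 1 :: complex) (Suc d) = (of_nat a + 1) * P1"
      by (simp add: P1_def pochhammer_rec add.assoc)
    have e2: "pochhammer (of_nat (a + k + j) :: complex) (Suc d) = P2 * (of_nat (a + k + j) + of_nat d)"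
      by (simp add: P2_def pochhammer_Suc)
    have e3: "pochhammer (of_nat (a + k + j) - 1 :: complex) (Suc d) = (of_nat (a + k + j) - 1) * P2"
      by (simp add: P2_def pochhammer_rec)
    have e4: "pochhammer (of_nat (Suc a) + 1 :: complex) d = P1" by (simp add: P1_def add.assoc add.commute)
    have cj: "of_nat (Suc j choose Suc i) = (of_nat (j choose i) + of_nat (j choose Suc i) :: complex)" by simp
    have E1: "Kc k (Suc j) \<mu> a = of_nat (Suc j choose Suc i) * (-4) ^ Suc d * ((of_nat a + 1) * P1) * (P2 * (of_nat (a + k + j) + of_nat d))"
      unfolding Kc_def Suc jd1 X e1 e2 by simp
    have E2: "Kc k j (\<mu> - 1) a = of_nat (j choose i) * (-4) ^ Suc d * ((of_nat a + 1) * P1) * ((of_nat (a + k + j) - 1) * P2)"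
      unfolding Kc_def Suc diff_Suc_1 jd1 e1 e3 by simp
    have E3: "Kc k j \<mu> (Suc a) = of_nat (j choose Suc i) * (-4) ^ d * P1 * P2"
      unfolding Kc_def Suc jd1 X2 e4 P2_def by simp
    have E4: "of_nat (a + k + 2 * j) = (of_nat (a + k + j) + of_nat i + (of_nat d + 1) :: complex)"
    proof -
      have "a + k + 2 * j = (a + k + j) + i + Suc d" using d by simp
      then show ?thesis by (simp only: of_nat_add[symmetric] of_nat_Suc[symmetric] add.commute[of _ 1] plus_1_eq_Suc)
    qed
    have E5: "of_nat (Suc a) = (of_nat a + 1 :: complex)" by simp
    have b'': "of_nat (j choose i) * (of_nat d + 1) = (of_nat (j choose Suc i) * (of_nat i + 1) :: complex)"
      using b' by (simp add: add.commute)
    have pw: "(-4 :: complex) ^ Suc d = -4 * (-4) ^ d" by simp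
    have goal': "(of_nat (j choose i) + of_nat (j choose Suc i)) * (-4) ^ Suc d * ((of_nat a + 1) * P1) * (P2 * (of_nat (a + k + j) + of_nat d))
      = of_nat (j choose i) * (-4) ^ Suc d * ((of_nat a + 1) * P1) * ((of_nat (a + k + j) - 1) * P2)
        - 4 * (of_nat a + 1) * (of_nat (a + k + j) + of_nat i + (of_nat d + 1)) * (of_nat (j choose Suc i) * (-4) ^ d * P1 * P2 :: complex)"
      unfolding pw by (rule K_alg[OF b''])
    have ifs: "(if \<mu> = 0 then 0 else Kc k j (\<mu> - 1) a) = of_nat (j choose i) * (-4) ^ Suc d * ((of_nat a + 1) * P1) * ((of_nat (a + k + j) - 1) * P2)"
      using Suc E2 by simp
    show ?thesis unfolding ifs E1 E3 E4 E5 cj by (rule goal')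
  qed
qed

fun bs :: "(nat \<Rightarrow> nat \<Rightarrow> complex) \<Rightarrow> complex \<Rightarrow> nat \<Rightarrow> nat \<Rightarrow> nat \<Rightarrow> nat \<Rightarrow> complex" where
  "bs \<beta> A k 0 = \<beta>"
| "bs \<beta> A k (Suc j) = step A (int k + 2 * int j) (bs \<beta> A k j)"

lemma good_bs: "good \<rho>0 R0 \<beta> \<Longrightarrow> good \<rho>0 R0 (bs \<beta> A k j)"
  by (induction j) (auto intro: good_step)

lemma Kc_zero: "Kc k j (Suc j) a = 0"
  by (simp add: Kc_def)

lemma bs_closed:
  "bs \<beta> A k j n a = (\<Sum>\<mu>\<le>j. Kc k j \<mu> a * (A * (2 * complex_of_real pi * \<i> * of_nat n)) ^ \<mu> * \<beta> n (a + j - \<mu>))"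
proof (induction j arbitrary: a)
  case 0
  then show ?case by (simp add: Kc_def)
next
  case (Suc j)
  define l where "l = A * (2 * complex_of_real pi * \<i> * of_nat n)"
  define C where "C = 4 * of_nat (Suc a) * (of_nat (a + k + 2 * j) :: complex)"
  have "bs \<beta> A k (Suc j) n a = l * bs \<beta> A k j n a - C * bs \<beta> A k j n (Suc a)"
    by (simp add: step_def Dt_def l_def C_def algebra_simps)
  also have "\<dots> = l * (\<Sum>\<mu>\<le>j. Kc k j \<mu> a * l ^ \<mu> * \<beta> n (a + j - \<mu>))
      - C * (\<Sum>\<mu>\<le>j. Kc k j \<mu> (Suc a) * l ^ \<mu> * \<beta> n (Suc a + j - \<mu>))"
    unfolding Suc.IH l_def ..
  also have "l * (\<Sum>\<mu>\<le>j. Kc k j \<mu> a * l ^ \<mu> * \<beta> n (a + j - \<mu>))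
      = (\<Sum>\<mu>\<le>Suc j. (if \<mu> = 0 then 0 else Kc k j (\<mu> - 1) a) * l ^ \<mu> * \<beta> n (a + Suc j - \<mu>))"
    by (subst sum.atMost_Suc_shift) (simp add: sum_distrib_left algebra_simps)
  also have "(\<Sum>\<mu>\<le>j. Kc k j \<mu> (Suc a) * l ^ \<mu> * \<beta> n (Suc a + j - \<mu>))
      = (\<Sum>\<mu>\<le>Suc j. Kc k j \<mu> (Suc a) * l ^ \<mu> * \<beta> n (a + Suc j - \<mu>))"
    by (simp add: Kc_zero)
  also have "(\<Sum>\<mu>\<le>Suc j. (if \<mu> = 0 then 0 else Kc k j (\<mu> - 1) a) * l ^ \<mu> * \<beta> n (a + Suc j - \<mu>))
      - C * (\<Sum>\<mu>\<le>Suc j. Kc k j \<mu> (Suc a) * l ^ \<mu> * \<beta> n (a + Suc j - \<mu>))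
      = (\<Sum>\<mu>\<le>Suc j. ((if \<mu> = 0 then 0 else Kc k j (\<mu> - 1) a) - C * Kc k j \<mu> (Suc a)) * l ^ \<mu> * \<beta> n (a + Suc j - \<mu>))"
    by (simp add: sum_distrib_left sum_subtractf algebra_simps)
  also have "\<dots> = (\<Sum>\<mu>\<le>Suc j. Kc k (Suc j) \<mu> a * l ^ \<mu> * \<beta> n (a + Suc j - \<mu>))"
    by (intro sum.cong refl) (simp add: K_rec C_def)
  finally show ?case by (simp add: l_def)
qed

lemma Dt_pow: "(Dt ^^ \<mu>) \<beta> n a = (2 * complex_of_real pi * \<i> * of_nat n) ^ \<mu> * \<beta> n a"
  by (induction \<mu>) (auto simp: Dt_def)

lemma good_Dt_pow: "good \<rho>0 R0 \<beta> \<Longrightarrow> good \<rho>0 R0 ((Dt ^^ \<mu>) \<beta>)"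
  by (induction \<mu>) (auto intro: good_Dt)

lemma gq_bs:
  assumes g: "good \<rho>0 R0 \<beta>" and R0: "0 < R0" and q: "norm q < \<rho>0"
  shows "gq (bs \<beta> A k \<nu>) 0 q = (\<Sum>\<mu>\<le>\<nu>. Kc k \<nu> \<mu> 0 * A ^ \<mu> * gq ((Dt ^^ \<mu>) \<beta>) (\<nu> - \<mu>) q)"
proof -
  have sm: "summable (\<lambda>n. (Kc k \<nu> \<mu> 0 * A ^ \<mu>) * ((Dt ^^ \<mu>) \<beta> n (\<nu> - \<mu>) * q ^ n))" for \<mu>
    by (intro summable_mult good_col[OF good_Dt_pow[OF g] R0 q])
  have "gq (bs \<beta> A k \<nu>) 0 q = (\<Sum>n. \<Sum>\<mu>\<le>\<nu>. (Kc k \<nu> \<mu> 0 * A ^ \<mu>) * ((Dt ^^ \<mu>) \<beta> n (\<nu> - \<mu>) * q ^ n))"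
    unfolding gq_def bs_closed Dt_pow
    by (intro suminf_cong) (simp add: sum_distrib_left sum_distrib_right power_mult_distrib mult_ac)
  also have "\<dots> = (\<Sum>\<mu>\<le>\<nu>. \<Sum>n. (Kc k \<nu> \<mu> 0 * A ^ \<mu>) * ((Dt ^^ \<mu>) \<beta> n (\<nu> - \<mu>) * q ^ n))"
    by (rule suminf_sum) (rule sm)
  also have "\<dots> = (\<Sum>\<mu>\<le>\<nu>. Kc k \<nu> \<mu> 0 * A ^ \<mu> * gq ((Dt ^^ \<mu>) \<beta>) (\<nu> - \<mu>) q)"
    unfolding gq_def
    by (intro sum.cong refl) (simp add: suminf_mult good_col[OF good_Dt_pow[OF g] R0 q])
  finally show ?thesis .
qed

lemma Kc_final:
  assumes "k > 0" "\<mu> \<le> \<nu>"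
  shows "Kc k \<nu> \<mu> 0 = of_nat (fact \<nu>) * ((-4) ^ (\<nu> - \<mu>) *
     (of_nat (fact (k + 2 * \<nu> - \<mu> - 2)) / (of_nat (fact \<mu>) * of_nat (fact (k + \<nu> - 2)))))"
proof -
  have f1: "of_nat (\<nu> choose \<mu>) * (fact (\<nu> - \<mu>) :: complex) = of_nat (fact \<nu>) / of_nat (fact \<mu>)"
  proof -
    have "fact \<mu> * fact (\<nu> - \<mu>) * (\<nu> choose \<mu>) = fact \<nu>" by (rule binomial_fact_lemma[OF assms(2)])
    then have "of_nat (fact \<mu>) * of_nat (fact (\<nu> - \<mu>)) * of_nat (\<nu> choose \<mu>) = (of_nat (fact \<nu>) :: complex)"
      by (metis of_nat_mult)
    then show ?thesis by (simp add: field_simps)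
  qed
  have f2: "pochhammer (of_nat (k + \<nu>) - 1) (\<nu> - \<mu>) = (of_nat (fact (k + 2 * \<nu> - \<mu> - 2)) / of_nat (fact (k + \<nu> - 2)) :: complex)"
  proof (cases "k + \<nu> \<ge> 2")
    case True
    have x: "of_nat (k + \<nu>) - 1 = (of_nat (k + \<nu> - 2) + 1 :: complex)" using True by (simp add: of_nat_diff)
    have y: "k + 2 * \<nu> - \<mu> - 2 = (k + \<nu> - 2) + (\<nu> - \<mu>)" using True assms(2) by simp
    have "fact (k + 2 * \<nu> - \<mu> - 2) = (fact (k + \<nu> - 2) * pochhammer (of_nat (k + \<nu> - 2) + 1) (\<nu> - \<mu>) :: complex)"
      unfolding y pochhammer_fact pochhammer_product' by (simp add: add.commute)
    then show ?thesis unfolding x by (simp add: field_simps)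
  next
    case False
    then have "k = 1" "\<nu> = 0" using assms by auto
    then show ?thesis using assms by simp
  qed
  show ?thesis unfolding Kc_def using f1 f2 by (simp add: pochhammer_fact[symmetric] field_simps)
qed

lemma diffs_pow: "(diffs ^^ j) c n = pochhammer (of_nat n + 1) j * c (n + j)"
proof (induction j arbitrary: n)
  case 0 then show ?case by simp
next
  case (Suc j)
  have "(diffs ^^ Suc j) c n = of_nat (Suc n) * (diffs ^^ j) c (Suc n)" by (simp add: diffs_def)
  also have "\<dots> = of_nat (Suc n) * (pochhammer (of_nat (Suc n) + 1) j * c (Suc n + j))" using Suc by simp
  also have "\<dots> = pochhammer (of_nat n + 1) (Suc j) * c (n + Suc j)"
    by (simp add: pochhammer_rec add_ac mult.assoc)
  finally show ?case .
qed

lemma powser_unique1: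
  fixes c :: "nat \<Rightarrow> complex"
  assumes d: "0 < \<delta>" and s: "\<And>z. norm z < \<delta> \<Longrightarrow> (\<lambda>n. c n * z ^ n) sums 0"
  shows "c n = 0"
proof -
  have "\<forall>z. norm z < \<delta> \<longrightarrow> (\<lambda>n. (diffs ^^ j) c n * z ^ n) sums 0" for j
  proof (induction j)
    case 0 then show ?case using s by simp
  next
    case (Suc j)
    show ?case
    proof (intro allI impI)
      fix z :: complex assume z: "norm z < \<delta>"
      have "(\<lambda>n. diffs ((diffs ^^ j) c) n * z ^ n) sums 0"
        by (rule termdiffs_sums_strong[of \<delta> _ "\<lambda>_. 0"]) (use Suc z in auto)
      then show "(\<lambda>n. (diffs ^^ Suc j) c n * z ^ n) sums 0" by simp
    qed
  qed
  from this[of n] d have "(\<lambda>k. (diffs ^^ n) c k * 0 ^ k) sums 0" by (metis norm_zero)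
  then have "(diffs ^^ n) c 0 = 0" by (simp add: powser_sums_zero_iff)
  then have "fact n * c n = 0" by (simp add: diffs_pow pochhammer_fact[symmetric])
  then show ?thesis by simp
qed

lemma powser_unique2:
  fixes d :: "nat \<Rightarrow> nat \<Rightarrow> complex"
  assumes dl: "0 < \<delta>"
    and s: "\<And>z1 z2. norm z1 < \<delta> \<Longrightarrow> norm z2 < \<delta> \<Longrightarrow> ((\<lambda>(a, b). d a b * z1 ^ a * z2 ^ b) has_sum 0) UNIV"
  shows "d a b = 0"
proof -
  define c where "c = (\<lambda>z2 a. infsum (\<lambda>b. d a b * z2 ^ b) UNIV)"
  define z0 :: complex where "z0 = of_real (\<delta> / 2)"
  have z0: "norm z0 < \<delta>" "z0 \<noteq> 0" using dl by (auto simp: z0_def)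
  have row: "(\<lambda>b. d a b * z2 ^ b) summable_on UNIV" if "norm z2 < \<delta>" for a z2
  proof -
    have S: "(\<lambda>(a, b). d a b * z0 ^ a * z2 ^ b) summable_on Sigma UNIV (\<lambda>_. UNIV)"
      using s[OF z0(1) that] by (auto simp: summable_on_def)
    have "(\<lambda>b. d a b * z0 ^ a * z2 ^ b) summable_on UNIV" using summable_on_SigmaD1[OF S] by simp
    then have "(\<lambda>b. inverse (z0 ^ a) * (d a b * z0 ^ a * z2 ^ b)) summable_on UNIV"
      by (rule summable_on_cmult_right)
    then show ?thesis using z0(2) by (simp add: field_simps)
  qed
  have c0: "c z2 a = 0" if z2: "norm z2 < \<delta>" for z2 a
  proof -
    have "(\<lambda>a. c z2 a * z1 ^ a) sums 0" if z1: "norm z1 < \<delta>" for z1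
    proof -
      have H: "((\<lambda>(a, b). d a b * z1 ^ a * z2 ^ b) has_sum 0) (Sigma UNIV (\<lambda>_. UNIV))"
        using s[OF z1 z2] by simp
      have inner: "((\<lambda>b. d a b * z1 ^ a * z2 ^ b) has_sum (c z2 a * z1 ^ a)) UNIV" for a
      proof -
        have "((\<lambda>b. d a b * z2 ^ b) has_sum c z2 a) UNIV" using row[OF z2] by (simp add: c_def summable_iff_has_sum_infsum[symmetric])
        from has_sum_cmult_right[OF this, of "z1 ^ a"] show ?thesis by (simp add: algebra_simps)
      qed
      have "((\<lambda>a. c z2 a * z1 ^ a) has_sum 0) UNIV"
        by (rule has_sum_Sigma'[OF H[unfolded case_prod_unfold]]) (use inner in \<open>simp add: case_prod_unfold\<close>)
      then show ?thesis by (rule has_sum_imp_sums)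
    qed
    then show ?thesis using powser_unique1[OF dl, of "c z2"] by blast
  qed
  have "(\<lambda>b. d a b * z ^ b) sums 0" if "norm z < \<delta>" for z
  proof -
    have "((\<lambda>b. d a b * z ^ b) has_sum c z a) UNIV" using row[OF that] by (simp add: c_def summable_iff_has_sum_infsum[symmetric])
    then show ?thesis using c0[OF that] by (simp add: has_sum_imp_sums)
  qed
  then show ?thesis using powser_unique1[OF dl, of "d a"] by blast
qed

lemma scaleR_fact_eq: "(\<lambda>a. x ^ a /\<^sub>R fact a) = (\<lambda>a. x ^ a / fact a)"
  for x :: "'a :: {real_normed_field}"
  by (rule ext) (simp add: scaleR_conv_of_real divide_inverse)

lemma has_sum_exp:
  fixes u :: "'a :: {real_normed_field, banach}"
  shows "((\<lambda>a. u ^ a / fact a) has_sum (exp u)) (UNIV :: nat set)"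
proof -
  have s: "(\<lambda>a. u ^ a / fact a) sums exp u" using exp_converges[of u] unfolding scaleR_fact_eq .
  have "(\<lambda>a. norm u ^ a / fact a) sums exp (norm u)" using exp_converges[of "norm u"] unfolding scaleR_fact_eq .
  then have "summable (\<lambda>a. norm u ^ a / fact a)" by (rule sums_summable)
  then have "summable (\<lambda>a. norm (u ^ a / fact a))" by (simp add: norm_divide norm_power)
  then show ?thesis by (rule norm_summable_imp_has_sum[OF _ s])
qed

lemma has_sum_exp2:
  fixes u v :: "'a :: {real_normed_field, banach}"
  shows "((\<lambda>(a, b). u ^ a / fact a * (v ^ b / fact b)) has_sum exp u * exp v) UNIV"
proof -
  let ?f = "\<lambda>(a::nat, b::nat). u ^ a / fact a * (v ^ b / fact b)"
  have hn: "((\<lambda>b. norm u ^ a / fact a * (norm v ^ b / fact b)) has_sum (norm u ^ a / fact a * exp (norm v))) UNIV" for a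
    by (rule has_sum_cmult_right[OF has_sum_exp])
  have go: "(\<lambda>a. norm u ^ a / fact a * exp (norm v)) summable_on UNIV"
    using has_sum_cmult_left[OF has_sum_exp[of "norm u"], of "exp (norm v)"] by (auto simp: summable_on_def)
  have "(\<lambda>(a, b). norm u ^ a / fact a * (norm v ^ b / fact b)) summable_on Sigma UNIV (\<lambda>_. UNIV)"
    by (rule summable_on_SigmaI[OF _ go]) (use hn in auto)
  then have "(\<lambda>(a, b). norm u ^ a / fact a * (norm v ^ b / fact b)) summable_on UNIV" by simp
  then have "(\<lambda>x. norm (?f x)) summable_on UNIV"
    by (rule summable_on_cong[THEN iffD1, rotated]) (auto simp: norm_mult norm_divide norm_power)
  then have sf: "?f summable_on Sigma UNIV (\<lambda>_. UNIV)" by (simp add: abs_summable_summable)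
  then have H: "(?f has_sum infsum ?f UNIV) (Sigma UNIV (\<lambda>_. UNIV))" by (simp add: summable_iff_has_sum_infsum[symmetric])
  have inner: "((\<lambda>b. ?f (a, b)) has_sum (u ^ a / fact a * exp v)) UNIV" for a
    using has_sum_cmult_right[OF has_sum_exp[of v], of "u ^ a / fact a"] by simp
  have "((\<lambda>a. u ^ a / fact a * exp v) has_sum infsum ?f UNIV) UNIV"
    by (rule has_sum_SigmaD[OF H]) (use inner in auto)
  moreover have "((\<lambda>a. u ^ a / fact a * exp v) has_sum exp u * exp v) UNIV"
    by (rule has_sum_cmult_left[OF has_sum_exp])
  ultimately have "infsum ?f UNIV = exp u * exp v" using has_sum_unique by blast
  then show ?thesis using H by simp
qed

definition Sn :: "nat \<Rightarrow> nat \<Rightarrow> complex set" where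
  "Sn m n = {r. r \<in> gauss_dual \<and> normK r \<le> real (n * m)}"

lemma SS_Sigma: "{(n, r). r \<in> gauss_dual \<and> normK r \<le> real (n * m)} = Sigma UNIV (Sn m)"
  by (auto simp: Sn_def)

lemma normK_norm: "normK r = norm r ^ 2"
  by (simp add: normK_def complex_mult_cnj cmod_power2)

lemma abs_cf:
  assumes F: "\<forall>t\<in>upper_half. \<forall>z1 z2. ((\<lambda>(n, r). cf n r * e (of_nat n * t + r * z1 + cnj r * z2)) has_sum \<phi> t z1 z2)
          {(n, r). r \<in> gauss_dual \<and> normK r \<le> real (n * m)}"
    and t: "0 \<le> \<tau>" "\<tau> < 1"
  shows "(\<lambda>(n, r). norm (cf n r) * \<tau> ^ n) summable_on Sigma UNIV (Sn m)"
proof -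
  define \<tau>' where "\<tau>' = (\<tau> + 1) / 2"
  have t': "0 < \<tau>'" "\<tau>' < 1" "\<tau> \<le> \<tau>'" using t by (auto simp: \<tau>'_def)
  define y where "y = - ln \<tau>' / (2 * pi)"
  have y: "y > 0" using t' by (simp add: y_def field_simps)
  define t0 where "t0 = \<i> * complex_of_real y"
  have tH: "t0 \<in> upper_half" using y by (simp add: t0_def upper_half_def)
  have ne: "norm (e t0) = \<tau>'" using t' by (simp add: norm_e t0_def y_def)
  have "((\<lambda>(n, r). cf n r * e (of_nat n * t0 + r * 0 + cnj r * 0)) has_sum \<phi> t0 0 0) (Sigma UNIV (Sn m))"
    using spec[OF spec[OF bspec[OF F tH], of 0], of 0] unfolding SS_Sigma .
  then have "(\<lambda>(n, r). cf n r * e (of_nat n * t0 + r * 0 + cnj r * 0)) summable_on Sigma UNIV (Sn m)"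
    by (auto simp: summable_on_def)
  then have "(\<lambda>x. norm ((\<lambda>(n, r). cf n r * e (of_nat n * t0 + r * 0 + cnj r * 0)) x)) summable_on Sigma UNIV (Sn m)"
    by (simp add: summable_on_iff_abs_summable_on_complex)
  then have S: "(\<lambda>(n, r). norm (cf n r) * \<tau>' ^ n) summable_on Sigma UNIV (Sn m)"
    by (rule summable_on_cong[THEN iffD1, rotated]) (auto simp: e_mult norm_mult norm_power ne)
  show ?thesis
  proof (rule summable_on_comparison_test[OF S])
    fix x :: "nat \<times> complex" assume "x \<in> Sigma UNIV (Sn m)"
    obtain n r where x: "x = (n, r)" by fastforce
    show "(case x of (n, r) \<Rightarrow> norm (cf n r) * \<tau> ^ n) \<le> (case x of (n, r) \<Rightarrow> norm (cf n r) * \<tau>' ^ n)"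
      using x t t' by (auto intro!: mult_left_mono power_mono)
    show "0 \<le> (case x of (n, r) \<Rightarrow> norm (cf n r) * \<tau> ^ n)" using x t by auto
  qed
qed

lemma infsum_norm_le:
  fixes f g :: "'a \<Rightarrow> complex"
  assumes s: "(\<lambda>r. norm (f r)) summable_on A" and B: "0 \<le> B" and le: "\<And>r. r \<in> A \<Longrightarrow> norm (g r) \<le> B * norm (f r)"
  shows "norm (infsum g A) \<le> B * infsum (\<lambda>r. norm (f r)) A"
proof -
  have sB: "(\<lambda>r. B * norm (f r)) summable_on A" by (rule summable_on_cmult_right[OF s])
  have sg: "(\<lambda>r. norm (g r)) summable_on A" by (rule Infinite_Sum.abs_summable_on_comparison_test'[OF sB le])
  have "norm (infsum g A) \<le> infsum (\<lambda>r. norm (g r)) A" by (rule norm_infsum_bound[OF sg])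
  also have "\<dots> \<le> infsum (\<lambda>r. B * norm (f r)) A" by (rule infsum_mono[OF sg sB le])
  also have "\<dots> = B * infsum (\<lambda>r. norm (f r)) A" by (rule infsum_cmult_right'[where 'b=real])
  finally show ?thesis .
qed

definition b0 :: "(nat \<Rightarrow> complex \<Rightarrow> complex) \<Rightarrow> nat \<Rightarrow> nat \<Rightarrow> nat \<Rightarrow> complex" where
  "b0 cf m n a = infsum (\<lambda>r. cf n r * ((2 * complex_of_real pi * \<i> * r) ^ a * (2 * complex_of_real pi * \<i> * cnj r) ^ a
      / (fact a * fact a))) (Sn m n)"

lemma coef_bound:
  assumes "r \<in> Sn m n"
  shows "norm ((2 * complex_of_real pi * \<i> * r) ^ a * (2 * complex_of_real pi * \<i> * cnj r) ^ a / (fact a * fact a))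
     \<le> (4 * pi ^ 2 * real (n * m)) ^ a / fact a"
proof -
  have nr: "norm r ^ 2 \<le> real (n * m)" using assms by (simp add: Sn_def normK_norm)
  have "norm ((2 * complex_of_real pi * \<i> * r) ^ a * (2 * complex_of_real pi * \<i> * cnj r) ^ a / (fact a * fact a))
      = ((2 * pi * norm r) * (2 * pi * norm r)) ^ a / (fact a * fact a)"
  proof -
    have four: "(2::real) ^ a * 2 ^ a = 4 ^ a" by (simp flip: power_mult_distrib)
    show ?thesis by (simp add: norm_mult norm_divide norm_power power_mult_distrib four)
  qed
  also have "(2 * pi * norm r) * (2 * pi * norm r) = 4 * pi ^ 2 * norm r ^ 2" by (simp add: power2_eq_square)
  also have "(4 * pi ^ 2 * norm r ^ 2) ^ a / (fact a * fact a) \<le> (4 * pi ^ 2 * real (n * m)) ^ a / (fact a * fact a)"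
    using nr by (intro divide_right_mono power_mono mult_left_mono) auto
  also have "\<dots> \<le> (4 * pi ^ 2 * real (n * m)) ^ a / fact a"
  proof -
    have "(1::real) \<le> fact a" by simp
    then have "fact a \<le> (fact a * fact a :: real)" by simp
    then show ?thesis by (intro divide_left_mono) auto
  qed
  finally show ?thesis .
qed

lemma good_b0:
  assumes F: "\<forall>t\<in>upper_half. \<forall>z1 z2. ((\<lambda>(n, r). cf n r * e (of_nat n * t + r * z1 + cnj r * z2)) has_sum \<phi> t z1 z2)
          {(n, r). r \<in> gauss_dual \<and> normK r \<le> real (n * m)}"
    and r0: "\<rho>0 * exp (4 * pi ^ 2 * real m * R0) \<le> 1"
  shows "good \<rho>0 R0 (b0 cf m)"
  unfolding good_def
proof (intro allI impI)
  fix \<rho> R :: real assume h: "0 \<le> \<rho>" "\<rho> < \<rho>0" "0 \<le> R" "R < R0"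
  define \<tau> where "\<tau> = \<rho> * exp (4 * pi ^ 2 * real m * R)"
  have \<tau>: "0 \<le> \<tau>" "\<tau> < 1"
  proof -
    show "0 \<le> \<tau>" using h by (simp add: \<tau>_def)
    have "exp (4 * pi ^ 2 * real m * R) \<le> exp (4 * pi ^ 2 * real m * R0)"
      using h by (intro exp_mono mult_left_mono) auto
    then have "\<tau> \<le> \<rho> * exp (4 * pi ^ 2 * real m * R0)" using h by (simp add: \<tau>_def mult_left_mono)
    also have "\<dots> < \<rho>0 * exp (4 * pi ^ 2 * real m * R0)" using h by simp
    finally show "\<tau> < 1" using r0 by simp
  qed
  have AC: "(\<lambda>(n, r). norm (cf n r) * (1/2) ^ n) summable_on Sigma UNIV (Sn m)"
    by (rule abs_cf[OF F]) auto
  have row: "(\<lambda>r. norm (cf n r)) summable_on Sn m n" for n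
  proof -
    have "(\<lambda>r. norm (cf n r) * (1/2) ^ n) summable_on Sn m n"
      using summable_on_SigmaD1[of "\<lambda>n r. norm (cf n r) * (1/2) ^ n", OF AC] by simp
    then have "(\<lambda>r. (norm (cf n r) * (1/2) ^ n) * 2 ^ n) summable_on Sn m n" by (rule summable_on_cmult_left)
    then show ?thesis by (simp add: power_one_over)
  qed
  define M where "M = (\<lambda>n. infsum (\<lambda>r. norm (cf n r)) (Sn m n))"
  have M0: "0 \<le> M n" for n unfolding M_def by (intro infsum_nonneg) auto
  have bnd: "norm (b0 cf m n a) \<le> (4 * pi ^ 2 * real (n * m)) ^ a / fact a * M n" for n a
    unfolding b0_def M_def
  proof (rule infsum_norm_le[OF row])
    show "0 \<le> (4 * pi ^ 2 * real (n * m)) ^ a / fact a" by simp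
    fix r assume r: "r \<in> Sn m n"
    show "norm (cf n r * ((2 * complex_of_real pi * \<i> * r) ^ a * (2 * complex_of_real pi * \<i> * cnj r) ^ a
      / (fact a * fact a))) \<le> (4 * pi ^ 2 * real (n * m)) ^ a / fact a * norm (cf n r)"
      unfolding norm_mult[of "cf n r"] mult.commute[of "norm (cf n r)"]
      by (rule mult_right_mono[OF coef_bound[OF r]]) simp
  qed
  define h where "h = (\<lambda>(n::nat, a::nat). M n * \<rho> ^ n * ((4 * pi ^ 2 * real (n * m) * R) ^ a / fact a))"
  have inner: "((\<lambda>a. h (n, a)) has_sum (M n * \<tau> ^ n)) UNIV" for n
  proof -
    have "((\<lambda>a. M n * \<rho> ^ n * ((4 * pi ^ 2 * real (n * m) * R) ^ a / fact a)) has_sum (M n * \<rho> ^ n * exp (4 * pi ^ 2 * real (n * m) * R))) UNIV"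
      by (rule has_sum_cmult_right[OF has_sum_exp])
    moreover have "exp (4 * pi ^ 2 * real (n * m) * R) = exp (4 * pi ^ 2 * real m * R) ^ n"
      by (simp add: exp_of_nat_mult[symmetric] algebra_simps)
    ultimately show ?thesis by (simp add: h_def \<tau>_def power_mult_distrib mult.assoc)
  qed
  have gs: "(\<lambda>n. M n * \<tau> ^ n) summable_on UNIV"
  proof -
    have S: "(\<lambda>(n, r). norm (cf n r) * \<tau> ^ n) summable_on Sigma UNIV (Sn m)" by (rule abs_cf[OF F \<tau>])
    have "(\<lambda>n. infsum (\<lambda>r. norm (cf n r) * \<tau> ^ n) (Sn m n)) summable_on UNIV"
      using summable_on_Sigma_banach[of "\<lambda>n r. norm (cf n r) * \<tau> ^ n", OF S]
      by (simp add: case_prod_unfold)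
    then show ?thesis by (simp add: M_def infsum_cmult_left')
  qed
  have hs: "h summable_on Sigma UNIV (\<lambda>_. UNIV)"
    by (rule summable_on_SigmaI[OF _ gs]) (use inner h M0 in \<open>auto simp: h_def\<close>)
  show "(\<lambda>(n, a). norm (b0 cf m n a) * \<rho> ^ n * R ^ a) summable_on UNIV"
  proof (rule summable_on_comparison_test)
    show "h summable_on UNIV" using hs by simp
    fix x :: "nat \<times> nat" obtain n a where x: "x = (n, a)" by fastforce
    have "norm (b0 cf m n a) * \<rho> ^ n * R ^ a \<le> (4 * pi ^ 2 * real (n * m)) ^ a / fact a * M n * \<rho> ^ n * R ^ a"
      using bnd[of n a] h by (intro mult_right_mono) auto
    also have "\<dots> = h (n, a)" by (simp add: h_def power_mult_distrib field_simps)
    finally show "(case x of (n, a) \<Rightarrow> norm (b0 cf m n a) * \<rho> ^ n * R ^ a) \<le> h x" using x by simp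
    show "0 \<le> (case x of (n, a) \<Rightarrow> norm (b0 cf m n a) * \<rho> ^ n * R ^ a)" using x h by simp
  qed
qed

lemma norm_le_1_normK: "norm r \<le> 1 + normK r"
proof -
  have "norm r \<le> 1 + norm r ^ 2"
  proof (cases "norm r \<le> 1")
    case True then show ?thesis by (smt (verit) zero_le_power2)
  next
    case False then have "norm r * 1 \<le> norm r * norm r" by (intro mult_left_mono) auto
    then have "norm r \<le> norm r ^ 2" by (simp add: power2_eq_square)
    then show ?thesis by simp
  qed
  then show ?thesis by (simp add: normK_norm)
qed

lemma chi_ident:
  assumes F: "\<forall>t\<in>upper_half. \<forall>z1 z2. ((\<lambda>(n, r). cf n r * e (of_nat n * t + r * z1 + cnj r * z2)) has_sum \<phi> t z1 z2)
          {(n, r). r \<in> gauss_dual \<and> normK r \<le> real (n * m)}"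
    and C: "\<forall>s \<in> upper_half. \<forall>z1 z2. ((\<lambda>(a, b). chi a b s * z1 ^ a * z2 ^ b) has_sum \<phi> s z1 z2) UNIV"
    and m: "m > 0" and tH: "t \<in> upper_half"
  shows "chi a a t = gq (b0 cf m) a (e t)"
proof -
  define SS where "SS = Sigma UNIV (Sn m)"
  have F': "((\<lambda>(n, r). cf n r * e (of_nat n * t + r * z1 + cnj r * z2)) has_sum \<phi> t z1 z2) SS" for z1 z2
    using spec[OF spec[OF bspec[OF F tH], of z1], of z2] unfolding SS_Sigma SS_def .
  define \<sigma> where "\<sigma> = norm (e t)"
  have \<sigma>: "0 < \<sigma>" "\<sigma> < 1" using tH by (auto simp: \<sigma>_def norm_e upper_half_def)
  define \<delta> where "\<delta> = - ln \<sigma> / (8 * pi * real m)"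
  have \<delta>: "0 < \<delta>" using \<sigma> m by (simp add: \<delta>_def divide_neg_pos)
  define X where "X = (\<lambda>a b r. (2 * complex_of_real pi * \<i> * r) ^ a * (2 * complex_of_real pi * \<i> * cnj r) ^ b / (fact a * fact b))"
  define T where "T = (\<lambda>z1 z2 ((n::nat, r::complex), (a::nat, b::nat)).
     cf n r * e (of_nat n * t) * ((2 * complex_of_real pi * \<i> * r * z1) ^ a / fact a * ((2 * complex_of_real pi * \<i> * cnj r * z2) ^ b / fact b)))"
  define Cf where "Cf = (\<lambda>a b. infsum (\<lambda>(n, r). cf n r * e (of_nat n * t) * X a b r) SS)"
  have TX: "T z1 z2 ((n, r), (a, b)) = cf n r * e (of_nat n * t) * X a b r * (z1 ^ a * z2 ^ b)" for z1 z2 n r a b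
    by (simp add: T_def X_def power_mult_distrib field_simps)
  have Tsum: "T z1 z2 summable_on Sigma SS (\<lambda>_. UNIV)" if z: "norm z1 < \<delta>" "norm z2 < \<delta>" for z1 z2
  proof -
    define s where "s = norm z1 + norm z2"
    have s: "0 \<le> s" "s < 2 * \<delta>" using z by (auto simp: s_def)
    define \<tau> where "\<tau> = \<sigma> * exp (2 * pi * s * real m)"
    have \<tau>: "0 \<le> \<tau>" "\<tau> < 1"
    proof -
      show "0 \<le> \<tau>" using \<sigma> by (simp add: \<tau>_def)
      have "2 * pi * s * real m < 2 * pi * (2 * \<delta>) * real m" using s m by simp
      also have "\<dots> = - ln \<sigma> / 2" using m by (simp add: \<delta>_def field_simps)
      finally have "\<tau> < \<sigma> * exp (- ln \<sigma> / 2)" using \<sigma> by (simp add: \<tau>_def)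
      also have "\<sigma> * exp (- ln \<sigma> / 2) = exp (ln \<sigma> / 2)"
      proof -
        have "\<sigma> * exp (- ln \<sigma> / 2) = exp (ln \<sigma>) * exp (- ln \<sigma> / 2)" using \<sigma> by simp
        also have "\<dots> = exp (ln \<sigma> + - ln \<sigma> / 2)" by (rule exp_add[symmetric])
        also have "ln \<sigma> + - ln \<sigma> / 2 = ln \<sigma> / 2" by simp
        finally show ?thesis .
      qed
      also have "\<dots> < 1" using \<sigma> by simp
      finally show "\<tau> < 1" .
    qed
    define gn where "gn = (\<lambda>(n::nat, r::complex). norm (cf n r) * \<sigma> ^ n * (exp (2 * pi * norm r * norm z1) * exp (2 * pi * norm r * norm z2)))"
    have inner: "((\<lambda>ab. norm (T z1 z2 (nr, ab))) has_sum gn nr) UNIV" for nr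
    proof -
      obtain n r where nr: "nr = (n, r)" by fastforce
      have "((\<lambda>(a, b). (2 * pi * norm r * norm z1) ^ a / fact a * ((2 * pi * norm r * norm z2) ^ b / fact b)) has_sum
          (exp (2 * pi * norm r * norm z1) * exp (2 * pi * norm r * norm z2))) UNIV"
        by (rule has_sum_exp2)
      from has_sum_cmult_right[OF this, of "norm (cf n r) * \<sigma> ^ n"]
      show ?thesis
        by (simp add: nr gn_def T_def case_prod_unfold norm_mult norm_divide norm_power \<sigma>_def e_mult)
    qed
    have gs: "gn summable_on SS"
    proof (rule summable_on_comparison_test)
      show "(\<lambda>x. exp (2 * pi * s) * (case x of (n, r) \<Rightarrow> norm (cf n r) * \<tau> ^ n)) summable_on SS"
        unfolding SS_def by (intro summable_on_cmult_right abs_cf[OF F \<tau>])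
      fix x assume x: "x \<in> SS"
      obtain n r where xn: "x = (n, r)" by fastforce
      have rn: "normK r \<le> real (n * m)" using x by (simp add: xn SS_def Sn_def)
      have "2 * pi * norm r * norm z1 + 2 * pi * norm r * norm z2 = 2 * pi * s * norm r" by (simp add: s_def algebra_simps)
      also have "\<dots> \<le> 2 * pi * s * (1 + real n * real m)"
        using norm_le_1_normK[of r] rn s by (intro mult_left_mono) auto
      also have "\<dots> = 2 * pi * s + real n * (2 * pi * s * real m)" by (simp add: algebra_simps)
      finally have "exp (2 * pi * norm r * norm z1) * exp (2 * pi * norm r * norm z2) \<le> exp (2 * pi * s) * exp (2 * pi * s * real m) ^ n"
        by (simp add: exp_add[symmetric] exp_of_nat_mult[symmetric])
      then have "norm (cf n r) * \<sigma> ^ n * (exp (2 * pi * norm r * norm z1) * exp (2 * pi * norm r * norm z2))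
          \<le> norm (cf n r) * \<sigma> ^ n * (exp (2 * pi * s) * exp (2 * pi * s * real m) ^ n)"
        using \<sigma> by (intro mult_left_mono) auto
      also have "\<dots> = exp (2 * pi * s) * (norm (cf n r) * \<tau> ^ n)" by (simp add: \<tau>_def power_mult_distrib)
      finally show "gn x \<le> exp (2 * pi * s) * (case x of (n, r) \<Rightarrow> norm (cf n r) * \<tau> ^ n)" by (simp add: xn gn_def)
      show "0 \<le> gn x" using \<sigma> by (simp add: xn gn_def)
    qed
    have "(\<lambda>x. norm (T z1 z2 x)) summable_on Sigma SS (\<lambda>_. UNIV)"
      by (rule summable_on_SigmaI[OF _ gs]) (use inner in auto)
    then show ?thesis by (simp add: abs_summable_summable)
  qed
  define z0 :: complex where "z0 = of_real (\<delta> / 2)"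
  have z0: "norm z0 < \<delta>" "z0 \<noteq> 0" using \<delta> by (auto simp: z0_def)
  have Tsw: "(\<lambda>(x, y). T z1 z2 (y, x)) summable_on Sigma UNIV (\<lambda>_. SS)" if "norm z1 < \<delta>" "norm z2 < \<delta>" for z1 z2
    using Tsum[OF that] summable_on_swap[of "T z1 z2" SS UNIV] by simp
  have Gsum: "(\<lambda>(n, r). cf n r * e (of_nat n * t) * X a b r) summable_on SS" for a b
  proof -
    have "(\<lambda>y. (\<lambda>(x, y). T z0 z0 (y, x)) ((a, b), y)) summable_on SS"
      using summable_on_SigmaD1[of "\<lambda>x y. T z0 z0 (y, x)", OF Tsw[OF z0(1) z0(1)]] by (simp add: case_prod_unfold)
    then have "(\<lambda>nr. inverse (z0 ^ a * z0 ^ b) * T z0 z0 (nr, (a, b))) summable_on SS"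
      by (intro summable_on_cmult_right) (simp add: case_prod_unfold)
    moreover have "(\<lambda>nr. inverse (z0 ^ a * z0 ^ b) * T z0 z0 (nr, (a, b))) = (\<lambda>(n, r). cf n r * e (of_nat n * t) * X a b r)"
      using z0(2) by (auto simp: fun_eq_iff TX field_simps)
    ultimately show ?thesis by simp
  qed
  have HX: "((\<lambda>(a, b). Cf a b * z1 ^ a * z2 ^ b) has_sum \<phi> t z1 z2) UNIV" if z: "norm z1 < \<delta>" "norm z2 < \<delta>" for z1 z2
  proof -
    define I where "I = infsum (T z1 z2) (Sigma SS (\<lambda>_. UNIV))"
    have H: "(T z1 z2 has_sum I) (Sigma SS (\<lambda>_. UNIV))"
      using Tsum[OF z] by (simp add: I_def summable_iff_has_sum_infsum[symmetric])
    have inner1: "((\<lambda>ab. T z1 z2 (nr, ab)) has_sum (case nr of (n, r) \<Rightarrow> cf n r * e (of_nat n * t + r * z1 + cnj r * z2))) UNIV" for nr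
    proof -
      obtain n r where nr: "nr = (n, r)" by fastforce
      have "((\<lambda>(a, b). (2 * complex_of_real pi * \<i> * r * z1) ^ a / fact a * ((2 * complex_of_real pi * \<i> * cnj r * z2) ^ b / fact b))
          has_sum exp (2 * complex_of_real pi * \<i> * r * z1) * exp (2 * complex_of_real pi * \<i> * cnj r * z2)) UNIV"
        by (rule has_sum_exp2)
      from has_sum_cmult_right[OF this, of "cf n r * e (of_nat n * t)"]
      have "((\<lambda>ab. T z1 z2 (nr, ab)) has_sum cf n r * e (of_nat n * t) * (exp (2 * complex_of_real pi * \<i> * r * z1) * exp (2 * complex_of_real pi * \<i> * cnj r * z2))) UNIV"
        by (simp add: nr T_def case_prod_unfold)
      moreover have "e (of_nat n * t) * (exp (2 * complex_of_real pi * \<i> * r * z1) * exp (2 * complex_of_real pi * \<i> * cnj r * z2))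
          = e (of_nat n * t + r * z1 + cnj r * z2)"
        by (simp add: e_def exp_add[symmetric] algebra_simps)
      ultimately show ?thesis by (simp add: nr mult.assoc)
    qed
    have "((\<lambda>nr. case nr of (n, r) \<Rightarrow> cf n r * e (of_nat n * t + r * z1 + cnj r * z2)) has_sum I) SS"
      by (rule has_sum_SigmaD[OF H]) (use inner1 in auto)
    then have I: "I = \<phi> t z1 z2" using F'[of z1 z2] has_sum_unique by (metis (no_types, lifting) case_prod_unfold has_sum_cong)
    have H2: "((\<lambda>(x, y). T z1 z2 (y, x)) has_sum I) (Sigma UNIV (\<lambda>_. SS))"
      using has_sum_swap[THEN iffD1, OF H] by simp
    have inner2: "((\<lambda>y. (\<lambda>(x, y). T z1 z2 (y, x)) (ab, y)) has_sum (case ab of (a, b) \<Rightarrow> Cf a b * z1 ^ a * z2 ^ b)) SS" for ab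
    proof -
      obtain a b where ab: "ab = (a, b)" by fastforce
      have "((\<lambda>(n, r). cf n r * e (of_nat n * t) * X a b r) has_sum Cf a b) SS"
        using Gsum[of a b] by (simp add: Cf_def summable_iff_has_sum_infsum[symmetric])
      from has_sum_cmult_left[OF this, of "z1 ^ a * z2 ^ b"]
      have "((\<lambda>(n, r). cf n r * e (of_nat n * t) * X a b r * (z1 ^ a * z2 ^ b)) has_sum Cf a b * (z1 ^ a * z2 ^ b)) SS"
        by (simp add: case_prod_unfold)
      moreover have "(\<lambda>y. T z1 z2 (y, (a, b))) = (\<lambda>(n, r). cf n r * e (of_nat n * t) * X a b r * (z1 ^ a * z2 ^ b))"
        by (auto simp: fun_eq_iff TX)
      ultimately show ?thesis by (simp add: ab mult.assoc)
    qed
    have "((\<lambda>ab. case ab of (a, b) \<Rightarrow> Cf a b * z1 ^ a * z2 ^ b) has_sum I) UNIV"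
      by (rule has_sum_SigmaD[OF H2]) (use inner2 in auto)
    then show ?thesis using I by (simp add: case_prod_unfold)
  qed
  have D0: "chi a b t - Cf a b = 0" for a b
  proof (rule powser_unique2[OF \<delta>])
    fix z1 z2 :: complex assume z: "norm z1 < \<delta>" "norm z2 < \<delta>"
    have "((\<lambda>(a, b). chi a b t * z1 ^ a * z2 ^ b) has_sum \<phi> t z1 z2) UNIV"
      using spec[OF spec[OF bspec[OF C tH], of z1], of z2] .
    from has_sum_add[OF this has_sum_cmult_right[OF HX[OF z], of "-1"]]
    show "((\<lambda>(a, b). (chi a b t - Cf a b) * z1 ^ a * z2 ^ b) has_sum 0) UNIV"
      by (simp add: case_prod_unfold algebra_simps)
  qed
  have G: "(\<lambda>(n, r). cf n r * e (of_nat n * t) * X a a r) summable_on Sigma UNIV (Sn m)"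
    using Gsum[of a a] by (simp add: SS_def)
  have inn: "infsum (\<lambda>r. cf n r * e (of_nat n * t) * X a a r) (Sn m n) = b0 cf m n a * e t ^ n" for n
  proof -
    have "infsum (\<lambda>r. cf n r * e (of_nat n * t) * X a a r) (Sn m n) = infsum (\<lambda>r. e t ^ n * (cf n r * X a a r)) (Sn m n)"
      unfolding e_mult by (simp add: mult_ac)
    also have "\<dots> = e t ^ n * infsum (\<lambda>r. cf n r * X a a r) (Sn m n)" by (rule infsum_cmult_right')
    finally show ?thesis by (simp add: b0_def X_def mult.commute)
  qed
  have O: "(\<lambda>n. infsum (\<lambda>r. cf n r * e (of_nat n * t) * X a a r) (Sn m n)) summable_on UNIV"
    using summable_on_Sigma_banach[of "\<lambda>n r. cf n r * e (of_nat n * t) * X a a r", OF G] .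
  have "Cf a a = infsum (\<lambda>n. infsum (\<lambda>r. cf n r * e (of_nat n * t) * X a a r) (Sn m n)) UNIV"
    using infsum_Sigma'_banach[of "\<lambda>n r. cf n r * e (of_nat n * t) * X a a r", OF G] by (simp add: Cf_def SS_def)
  also have "\<dots> = (\<Sum>n. b0 cf m n a * e t ^ n)" using nat_infsum[OF O] by (simp add: inn)
  finally show ?thesis using D0[of a a] by (simp add: gq_def)
qed

lemma nontriv: "\<not> trivial_limit (at (0::complex, 0::complex) within {p :: complex \<times> complex. fst p \<noteq> 0 \<and> snd p \<noteq> 0})"
  unfolding trivial_limit_within islimpt_approachable
proof (intro notI)
  assume "\<not> (\<forall>\<epsilon>>0. \<exists>x'\<in>{p :: complex \<times> complex. fst p \<noteq> 0 \<and> snd p \<noteq> 0}. x' \<noteq> (0, 0) \<and> dist x' (0, 0) < \<epsilon>)"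
  moreover have "\<exists>x'\<in>{p :: complex \<times> complex. fst p \<noteq> 0 \<and> snd p \<noteq> 0}. x' \<noteq> (0, 0) \<and> dist x' (0, 0) < \<epsilon>" if e: "\<epsilon> > 0" for \<epsilon>
  proof -
    define c :: complex where "c = of_real (\<epsilon> / 4)"
    have c: "c \<noteq> 0" "norm c = \<epsilon> / 4" using e by (auto simp: c_def)
    have s2: "sqrt 2 < (4::real)" by (rule real_less_lsqrt) auto
    have "\<epsilon> / 4 < \<epsilon> / sqrt 2" by (rule divide_strict_left_mono[OF s2 e]) simp
    then have lt: "\<bar>\<epsilon> / 4\<bar> < \<epsilon> / sqrt 2" using e by simp
    have "dist (c, c) (0, 0) = sqrt ((\<epsilon> / 4)\<^sup>2 + (\<epsilon> / 4)\<^sup>2)" by (simp add: dist_Pair_Pair c)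
    also have "\<dots> < \<epsilon>" by (rule real_sqrt_sum_squares_less[OF lt lt])
    finally show ?thesis using c by (intro bexI[of _ "(c, c)"]) auto
  qed
  ultimately show False by blast
qed

theorem corollary3p8:
  fixes k m \<nu> :: nat and \<phi> :: "complex \<Rightarrow> complex \<Rightarrow> complex \<Rightarrow> complex"
    and chi :: "nat \<Rightarrow> nat \<Rightarrow> complex \<Rightarrow> complex" and t :: complex
  assumes "k > 0" and "m > 0"
    and "\<phi> \<in> jacobi_forms k m"
    and "\<forall>s \<in> upper_half. \<forall>z1 z2.
           ((\<lambda>(a, b). chi a b s * z1 ^ a * z2 ^ b) has_sum \<phi> s z1 z2) UNIV"
    and "t \<in> upper_half"
  shows "D_op k m \<nu> chi t =
    of_nat (fact \<nu>) * (\<Sum>\<mu> = 0..\<nu>. (-4) ^ (\<nu> - \<mu>) * (8 * complex_of_real pi * \<i> * of_nat m) ^ \<mu> *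
       (of_nat (fact (k + 2 * \<nu> - \<mu> - 2)) / (of_nat (fact \<mu>) * of_nat (fact (k + \<nu> - 2)))) *
       (deriv ^^ \<mu>) (chi (\<nu> - \<mu>) (\<nu> - \<mu>)) t)"
proof -
  note kpos = assms(1) and mpos = assms(2) and C = assms(4) and tH = assms(5)
  obtain cf where F: "\<forall>t\<in>upper_half. \<forall>z1 z2. ((\<lambda>(n, r). cf n r * e (of_nat n * t + r * z1 + cnj r * z2)) has_sum \<phi> t z1 z2)
          {(n, r). r \<in> gauss_dual \<and> normK r \<le> real (n * m)}"
    using assms(3) unfolding jacobi_forms_def by blast
  define \<sigma> where "\<sigma> = norm (e t)"
  have \<sigma>: "0 < \<sigma>" "\<sigma> < 1" using tH by (auto simp: \<sigma>_def norm_e upper_half_def)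
  define \<rho>0 where "\<rho>0 = (1 + \<sigma>) / 2"
  have \<rho>0: "0 < \<rho>0" "\<rho>0 < 1" "\<sigma> < \<rho>0" using \<sigma> by (auto simp: \<rho>0_def)
  define R0 where "R0 = - ln \<rho>0 / (4 * pi ^ 2 * real m)"
  have R0: "0 < R0" using \<rho>0 mpos by (simp add: R0_def divide_neg_pos)
  have r0: "\<rho>0 * exp (4 * pi ^ 2 * real m * R0) \<le> 1"
  proof -
    have "4 * pi ^ 2 * real m * R0 = - ln \<rho>0" using mpos by (simp add: R0_def)
    then show ?thesis using \<rho>0 by (simp add: exp_minus field_simps)
  qed
  define \<beta>0 where "\<beta>0 = b0 cf m"
  have g0: "good \<rho>0 R0 \<beta>0" unfolding \<beta>0_def by (rule good_b0[OF F r0])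
  define A where "A = 8 * complex_of_real pi * \<i> * of_nat m"
  have UH: "s \<in> upper_half" if "norm (e s) < \<rho>0" for s
  proof -
    have "exp (- 2 * pi * Im s) < 1" using that \<rho>0 norm_e[of s] by linarith
    then have "- 2 * pi * Im s < 0" by (metis exp_less_cancel_iff exp_zero)
    then have "0 < pi * Im s" by simp
    then have "0 < Im s" using pi_gt_zero by (simp add: zero_less_mult_iff)
    then show ?thesis by (simp add: upper_half_def)
  qed
  have chiU: "chi a a s = gq \<beta>0 a (e s)" if "norm (e s) < \<rho>0" for a s
    unfolding \<beta>0_def by (rule chi_ident[OF F C mpos UH[OF that]])
  have P: "Dtilde k m j (diag_part chi) s z1 z2 = Fw (bs \<beta>0 A k j) (e s) (z1 * z2)"
    if "norm (e s) < \<rho>0" "z1 \<noteq> 0" "z2 \<noteq> 0" "norm (z1 * z2) < R0" for j s z1 z2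
    using that
  proof (induction j arbitrary: s z1 z2)
    case 0
    then show ?case by (simp add: diag_part_def Fw_def chiU)
  next
    case (Suc j)
    have "Dtilde k m (Suc j) (diag_part chi) s z1 z2 = L_op (int k + 2 * int j) m (Dtilde k m j (diag_part chi)) s z1 z2"
      by simp
    also have "\<dots> = Fw (step (8 * complex_of_real pi * \<i> * of_nat m) (int k + 2 * int j) (bs \<beta>0 A k j)) (e s) (z1 * z2)"
      by (rule L_step[OF good_bs[OF g0] Suc.IH Suc.prems])
    also have "step (8 * complex_of_real pi * \<i> * of_nat m) = step A" by (simp add: A_def)
    finally show ?case by simp
  qed
  define W where "W = {p :: complex \<times> complex. fst p \<noteq> 0 \<and> snd p \<noteq> 0}"
  define g where "g = (\<lambda>p :: complex \<times> complex. Fw (bs \<beta>0 A k \<nu>) (e t) (fst p * snd p))"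
  have et: "norm (e t) < \<rho>0" using \<rho>0 by (simp add: \<sigma>_def)
  have contF: "isCont (Fw (bs \<beta>0 A k \<nu>) (e t)) 0"
    by (rule DERIV_isCont[OF Fw_dw[OF good_bs[OF g0] et]]) (use R0 in simp)
  have "isCont g (0, 0)" unfolding g_def
    by (rule continuous_at_compose[of _ "\<lambda>p. fst p * snd p", unfolded o_def, OF _ ]) (use contF in \<open>auto intro!: continuous_intros\<close>)
  then have lim1: "(g \<longlongrightarrow> g (0, 0)) (at (0, 0) within W)"
    by (simp add: isCont_def tendsto_within_subset[OF _ subset_UNIV])
  have op: "open {p :: complex \<times> complex. norm (fst p * snd p) < R0}"
    by (intro open_Collect_less continuous_intros)
  have ev0: "eventually (\<lambda>p :: complex \<times> complex. norm (fst p * snd p) < R0) (nhds (0, 0))"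
    using eventually_nhds_in_open[OF op] R0 by simp
  have ev: "eventually (\<lambda>p. g p = Dtilde k m \<nu> (diag_part chi) t (fst p) (snd p)) (at (0, 0) within W)"
    unfolding eventually_at_filter
    by (rule eventually_mono[OF ev0]) (auto simp: W_def g_def P[OF et])
  have lim2: "((\<lambda>p. Dtilde k m \<nu> (diag_part chi) t (fst p) (snd p)) \<longlongrightarrow> g (0, 0)) (at (0, 0) within W)"
    by (rule Lim_transform_eventually[OF lim1 ev])
  have Dval: "D_op k m \<nu> chi t = gq (bs \<beta>0 A k \<nu>) 0 (e t)"
  proof -
    have "D_op k m \<nu> chi t = g (0, 0)"
      unfolding D_op_def by (rule tendsto_Lim[OF nontriv lim2[unfolded W_def]])
    then show ?thesis by (simp add: g_def Fw_def)
  qed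
  have dchi: "(deriv ^^ \<mu>) (chi a a) s = gq ((Dt ^^ \<mu>) \<beta>0) a (e s)" if "norm (e s) < \<rho>0" for \<mu> a s
    using that
  proof (induction \<mu> arbitrary: s)
    case 0 then show ?case by (simp add: chiU)
  next
    case (Suc \<mu>)
    have ev: "eventually (\<lambda>s'. (deriv ^^ \<mu>) (chi a a) s' = gq ((Dt ^^ \<mu>) \<beta>0) a (e s')) (nhds s)"
      using eventually_nhds_in_open[OF open_U, of s \<rho>0] Suc.prems by (auto elim!: eventually_mono simp: Suc.IH)
    have "(deriv ^^ Suc \<mu>) (chi a a) s = deriv ((deriv ^^ \<mu>) (chi a a)) s" by simp
    also have "\<dots> = deriv (\<lambda>s'. gq ((Dt ^^ \<mu>) \<beta>0) a (e s')) s" by (rule deriv_cong_ev[OF ev refl])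
    also have "\<dots> = gq (Dt ((Dt ^^ \<mu>) \<beta>0)) a (e s)"
      by (rule DERIV_imp_deriv[OF gq_deriv[OF good_Dt_pow[OF g0] Suc.prems R0]])
    finally show ?case by simp
  qed
  have "D_op k m \<nu> chi t = (\<Sum>\<mu>\<le>\<nu>. Kc k \<nu> \<mu> 0 * A ^ \<mu> * gq ((Dt ^^ \<mu>) \<beta>0) (\<nu> - \<mu>) (e t))"
    unfolding Dval by (rule gq_bs[OF g0 R0 et])
  also have "\<dots> = (\<Sum>\<mu>\<le>\<nu>. of_nat (fact \<nu>) * ((-4) ^ (\<nu> - \<mu>) * A ^ \<mu> *
       (of_nat (fact (k + 2 * \<nu> - \<mu> - 2)) / (of_nat (fact \<mu>) * of_nat (fact (k + \<nu> - 2)))) *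
       (deriv ^^ \<mu>) (chi (\<nu> - \<mu>) (\<nu> - \<mu>)) t))"
    by (intro sum.cong refl) (simp add: Kc_final[OF kpos] dchi[OF et] mult_ac)
  also have "\<dots> = of_nat (fact \<nu>) * (\<Sum>\<mu> = 0..\<nu>. (-4) ^ (\<nu> - \<mu>) * A ^ \<mu> *
       (of_nat (fact (k + 2 * \<nu> - \<mu> - 2)) / (of_nat (fact \<mu>) * of_nat (fact (k + \<nu> - 2)))) *
       (deriv ^^ \<mu>) (chi (\<nu> - \<mu>) (\<nu> - \<mu>)) t)"
    by (simp add: sum_distrib_left atLeast0AtMost)
  finally show ?thesis by (simp add: A_def)
qed

end
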